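(* Let $G$ be a copious graph on $[n]$ which has a universal vertex. Then $G$ is topologically copious.
   Context: Setup. $G\subseteq\binom{[n]}{2}$ is a simple graph, $n\ge4$, and $G_i$ is the set of neighbours of $i$. A vertex is universal if it is adjacent to all other vertices. The kinematic space $\mathcal K_G\subseteq\mathbb C^{|G|}$ (also in $\mathbb P^{|G|-1}$) is defined by $\sum_{j\in G_i}s_{ij}=0$ for $i\in[n]$, and $\kappa(G)$ is its codimension. $\mathcal H=\bigcup_{i<j}\{x_i=x_j\}$. $\mathcal M_{0,n}$ is the moduli space of $n$ distinct points on $\mathbb P^1$ modulo $\mathrm{PGL}(2)$ (action $x_i\mapsto(ax_i+b)/(cx_i+d)$). Copious. The scattering correspondence is $$\mathcal V_G=\{(s,x)\in\mathbb P^{|G|-1}\times(\mathbb P^{n-1}\setminus\mathcal H): s\in\mathcal K_G,\ \textstyle\sum_{j\in G_i}s_{ij}/(x_i-x_j)=0\ \forall i\},$$ with projections $\mathcal K_G\leftarrow\mathcal V_G\to\mathcal M_{0,n}$ (an $x$-solution orbit is a point of $\mathcal M_{0,n}$). $G$ is copious if $\mathcal V_G\to\mathcal M_{0,n}$ is dominant and the generic fiber of $\mathcal V_G\to\mathcal K_G$ has dimension two in $\mathbb P^{n-1}$ (modulo $\mathrm{PGL}(2)$ it is finite-to-one). Topologically copious. The kinematic lattice $\Lambda_G=\mathcal K_G\cap\mathbb Z^{|G|}$ has rank $r=|G|-\kappa(G)$. For $u\in\Lambda_G$ set $\tilde u(x)=\prod_{ij\in G,\,i<j}(x_i-x_j)^{u_{ij}}$,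 a $\mathrm{PGL}(2)$-invariant regular function on $\mathcal M_{0,n}$. For a $\mathbb Z$-basis $u_1,\dots,u_r$, $\Phi_G:\mathcal M_{0,n}\to(\mathbb C^* )^r$ is $x\mapsto(\tilde u_k(x))_k$. $G$ is topologically copious if $\Phi_G$ is an embedding (an isomorphism onto its image). *)

theory Defs
  imports Complex_Main
begin

inductive_set polyfun :: "(('v \<Rightarrow> complex) \<Rightarrow> complex) set" where
  pconst: "(\<lambda>_. c) \<in> polyfun"
| pvar:   "(\<lambda>x. x v) \<in> polyfun"
| padd:   "p \<in> polyfun \<Longrightarrow> q \<in> polyfun \<Longrightarrow> (\<lambda>x. p x + q x) \<in> polyfun"
| pmult:  "p \<in> polyfun \<Longrightarrow> q \<in> polyfun \<Longrightarrow> (\<lambda>x. p x * q x) \<in> polyfun"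

definition zariski_dense_in :: "('v \<Rightarrow> complex) set \<Rightarrow> ('v \<Rightarrow> complex) set \<Rightarrow> bool" where
  "zariski_dense_in X Y \<longleftrightarrow> (\<forall>p\<in>polyfun. (\<forall>x\<in>X. p x = 0) \<longrightarrow> (\<forall>y\<in>Y. p y = 0))"

text \<open>A property holds for generic points of the (irreducible) set K:
  on a nonempty Zariski-open subset of K.  Nonzero points only (projective).\<close>
definition generic_on :: "('v \<Rightarrow> complex) set \<Rightarrow> (('v \<Rightarrow> complex) \<Rightarrow> bool) \<Rightarrow> bool" where
  "generic_on K P \<longleftrightarrow> (\<exists>p\<in>polyfun. (\<exists>s\<in>K. p s \<noteq> 0) \<and>
      (\<forall>s\<in>K. (\<exists>v. s v \<noteq> 0) \<longrightarrow> p s \<noteq> 0 \<longrightarrow> P s))"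

text \<open>Edges are pairs (i,j) with i < j.\<close>
definition edge :: "nat \<Rightarrow> nat \<Rightarrow> nat \<times> nat" where
  "edge i j = (min i j, max i j)"

definition simple_graph :: "nat \<Rightarrow> (nat \<times> nat) set \<Rightarrow> bool" where
  "simple_graph n G \<longleftrightarrow> G \<subseteq> {(i, j). i < j \<and> j < n}"

definition nbrs :: "nat \<Rightarrow> (nat \<times> nat) set \<Rightarrow> nat \<Rightarrow> nat set" where
  "nbrs n G i = {j. j < n \<and> j \<noteq> i \<and> edge i j \<in> G}"

definition universal_vertex :: "nat \<Rightarrow> (nat \<times> nat) set \<Rightarrow> nat \<Rightarrow> bool" where
  "universal_vertex n G v \<longleftrightarrow> v < n \<and> (\<forall>j<n. j \<noteq> v \<longrightarrow> edge v j \<in> G)"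

definition kin_space :: "nat \<Rightarrow> (nat \<times> nat) set \<Rightarrow> (nat \<times> nat \<Rightarrow> complex) set" where
  "kin_space n G = {s. (\<forall>e. e \<notin> G \<longrightarrow> s e = 0) \<and>
      (\<forall>i<n. (\<Sum>j\<in>nbrs n G i. s (edge i j)) = 0)}"

definition kin_lattice :: "nat \<Rightarrow> (nat \<times> nat) set \<Rightarrow> (nat \<times> nat \<Rightarrow> int) set" where
  "kin_lattice n G = {u. (\<forall>e. e \<notin> G \<longrightarrow> u e = 0) \<and>
      (\<forall>i<n. (\<Sum>j\<in>nbrs n G i. u (edge i j)) = 0)}"

text \<open>Configurations of n distinct points of the affine line (the complement of H);
  coordinates beyond n are set to 0.\<close>
definition conf :: "nat \<Rightarrow> (nat \<Rightarrow> complex) set" where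
  "conf n = {x. (\<forall>i<n. \<forall>j<n. i \<noteq> j \<longrightarrow> x i \<noteq> x j) \<and> (\<forall>i\<ge>n. x i = 0)}"

text \<open>Two configurations give the same point of M_{0,n} iff related by PGL(2).\<close>
definition mob_equiv :: "nat \<Rightarrow> (nat \<Rightarrow> complex) \<Rightarrow> (nat \<Rightarrow> complex) \<Rightarrow> bool" where
  "mob_equiv n x y \<longleftrightarrow> (\<exists>a b c d. a * d - b * c \<noteq> 0 \<and>
      (\<forall>i<n. c * x i + d \<noteq> 0 \<and> y i = (a * x i + b) / (c * x i + d)))"

definition mob_class :: "nat \<Rightarrow> (nat \<Rightarrow> complex) \<Rightarrow> (nat \<Rightarrow> complex) set" where
  "mob_class n x = {y \<in> conf n. mob_equiv n x y}"

text \<open>Cross-ratio; these functions generate the coordinate ring of M_{0,n}.\<close>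
definition cross_ratio :: "nat \<Rightarrow> nat \<Rightarrow> nat \<Rightarrow> nat \<Rightarrow> (nat \<Rightarrow> complex) \<Rightarrow> complex" where
  "cross_ratio i j k l x = ((x i - x k) * (x j - x l)) / ((x i - x l) * (x j - x k))"

definition scat_eqs :: "nat \<Rightarrow> (nat \<times> nat) set \<Rightarrow> (nat \<times> nat \<Rightarrow> complex) \<Rightarrow> (nat \<Rightarrow> complex) \<Rightarrow> bool" where
  "scat_eqs n G s x \<longleftrightarrow> (\<forall>i<n. (\<Sum>j\<in>nbrs n G i. s (edge i j) / (x i - x j)) = 0)"

definition scat_fiber :: "nat \<Rightarrow> (nat \<times> nat) set \<Rightarrow> (nat \<times> nat \<Rightarrow> complex) \<Rightarrow> (nat \<Rightarrow> complex) set" where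
  "scat_fiber n G s = {x \<in> conf n. scat_eqs n G s x}"

definition scat_image :: "nat \<Rightarrow> (nat \<times> nat) set \<Rightarrow> (nat \<Rightarrow> complex) set" where
  "scat_image n G = {x \<in> conf n. \<exists>s\<in>kin_space n G. (\<exists>e. s e \<noteq> 0) \<and> scat_eqs n G s x}"

definition copious :: "nat \<Rightarrow> (nat \<times> nat) set \<Rightarrow> bool" where
  "copious n G \<longleftrightarrow>
     zariski_dense_in (scat_image n G) (conf n) \<and>
     generic_on (kin_space n G)
       (\<lambda>s. scat_fiber n G s \<noteq> {} \<and> finite (mob_class n ` scat_fiber n G s))"

definition is_lattice_basis :: "nat \<Rightarrow> (nat \<times> nat) set \<Rightarrow> nat \<Rightarrow> (nat \<Rightarrow> nat \<times> nat \<Rightarrow> int) \<Rightarrow> bool" where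
  "is_lattice_basis n G r u \<longleftrightarrow>
     (\<forall>k<r. u k \<in> kin_lattice n G) \<and>
     (\<forall>v\<in>kin_lattice n G. \<exists>c :: nat \<Rightarrow> int. v = (\<lambda>e. \<Sum>k<r. c k * u k e)) \<and>
     (\<forall>c :: nat \<Rightarrow> int. (\<forall>e. (\<Sum>k<r. c k * u k e) = 0) \<longrightarrow> (\<forall>k<r. c k = 0))"

definition utilde :: "(nat \<times> nat) set \<Rightarrow> (nat \<times> nat \<Rightarrow> int) \<Rightarrow> (nat \<Rightarrow> complex) \<Rightarrow> complex" where
  "utilde G u x = (\<Prod>e\<in>G. (x (fst e) - x (snd e)) powi u e)"

definition Phi :: "(nat \<times> nat) set \<Rightarrow> nat \<Rightarrow> (nat \<Rightarrow> nat \<times> nat \<Rightarrow> int) \<Rightarrow> (nat \<Rightarrow> complex) \<Rightarrow> (nat \<Rightarrow> complex)" where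
  "Phi G r u x = (\<lambda>k. if k < r then utilde G (u k) x else 0)"

definition torus :: "nat \<Rightarrow> (nat \<Rightarrow> complex) set" where
  "torus r = {z. (\<forall>k<r. z k \<noteq> 0) \<and> (\<forall>k\<ge>r. z k = 0)}"

definition locally_closed_in_torus :: "nat \<Rightarrow> (nat \<Rightarrow> complex) set \<Rightarrow> bool" where
  "locally_closed_in_torus r Z \<longleftrightarrow> (\<exists>F H. F \<subseteq> polyfun \<and> H \<subseteq> polyfun \<and> finite H \<and>
      Z = {z \<in> torus r. (\<forall>f\<in>F. f z = 0) \<and> (\<exists>h\<in>H. h z \<noteq> 0)})"

text \<open>Phi : M_{0,n} -> (C^*)^r is an isomorphism onto its image: it is injective on
  M_{0,n}, its image is a locally closed subvariety, and the inverse map is regular,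
  i.e. every cross-ratio, transported to the image, is locally a quotient of polynomials.\<close>
definition embedding_M0n :: "nat \<Rightarrow> nat \<Rightarrow> ((nat \<Rightarrow> complex) \<Rightarrow> (nat \<Rightarrow> complex)) \<Rightarrow> bool" where
  "embedding_M0n n r F \<longleftrightarrow>
     (\<forall>x\<in>conf n. \<forall>y\<in>conf n. F x = F y \<longrightarrow> mob_equiv n x y) \<and>
     locally_closed_in_torus r (F ` conf n) \<and>
     (\<forall>i j k l. i < n \<longrightarrow> j < n \<longrightarrow> k < n \<longrightarrow> l < n \<longrightarrow> distinct [i, j, k, l] \<longrightarrow>
        (\<forall>z\<in>F ` conf n. \<exists>p\<in>polyfun. \<exists>q\<in>polyfun. q z \<noteq> 0 \<and>
           (\<forall>x\<in>conf n. q (F x) \<noteq> 0 \<longrightarrow> cross_ratio i j k l x * q (F x) = p (F x))))"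

definition top_copious :: "nat \<Rightarrow> (nat \<times> nat) set \<Rightarrow> bool" where
  "top_copious n G \<longleftrightarrow>
     (\<forall>r u. is_lattice_basis n G r u \<longrightarrow> embedding_M0n n r (Phi G r u))"

end

theory Submission
  imports Defs
begin


lemma polyfun_const: "(\<lambda>_. c) \<in> polyfun" by (rule polyfun.pconst)
lemma polyfun_var: "(\<lambda>x. x k) \<in> polyfun" by (rule polyfun.pvar)

lemma polyfun_add: "p \<in> polyfun \<Longrightarrow> q \<in> polyfun \<Longrightarrow> (\<lambda>x. p x + q x) \<in> polyfun"
  by (rule polyfun.padd)
lemma polyfun_mult: "p \<in> polyfun \<Longrightarrow> q \<in> polyfun \<Longrightarrow> (\<lambda>x. p x * q x) \<in> polyfun"
  by (rule polyfun.pmult)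

lemma polyfun_uminus: "p \<in> polyfun \<Longrightarrow> (\<lambda>x. - p x) \<in> polyfun"
  using polyfun_mult[OF polyfun_const[of "-1"], of p] by simp

lemma polyfun_diff: "p \<in> polyfun \<Longrightarrow> q \<in> polyfun \<Longrightarrow> (\<lambda>x. p x - q x) \<in> polyfun"
  using polyfun_add[OF _ polyfun_uminus[of q], of p] by simp

lemma polyfun_power: "p \<in> polyfun \<Longrightarrow> (\<lambda>x. p x ^ N) \<in> polyfun"
proof (induction N)
  case 0 then show ?case using polyfun_const[of 1] by simp
next
  case (Suc N) then show ?case using polyfun_mult[of p "\<lambda>x. p x ^ N"] by simp
qed

lemma polyfun_prod: "finite S \<Longrightarrow> (\<And>k. k \<in> S \<Longrightarrow> f k \<in> polyfun) \<Longrightarrow> (\<lambda>x. \<Prod>k\<in>S. f k x) \<in> polyfun"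
proof (induction S rule: finite_induct)
  case empty then show ?case using polyfun_const[of 1] by simp
next
  case (insert a S)
  then show ?case using polyfun_mult[of "f a" "\<lambda>x. \<Prod>k\<in>S. f k x"] by simp
qed

section \<open>Laurent polynomials on the torus\<close>

definition mP :: "nat \<Rightarrow> (nat \<Rightarrow> complex) \<Rightarrow> complex" where
  "mP r z = (\<Prod>k<r. z k)"

definition Lp :: "nat \<Rightarrow> ((nat \<Rightarrow> complex) \<Rightarrow> complex) set" where
  "Lp r = {f. \<exists>p\<in>polyfun. \<exists>N. \<forall>z\<in>torus r. f z * mP r z ^ N = p z}"

lemma mP_polyfun: "mP r \<in> polyfun"
proof -
  have "(\<lambda>z. \<Prod>k\<in>{..<r}. z k) \<in> polyfun" by (rule polyfun_prod) (auto intro: polyfun_var)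
  then show ?thesis by (simp add: mP_def[abs_def])
qed

lemma mP_nz: "z \<in> torus r \<Longrightarrow> mP r z \<noteq> 0"
  by (auto simp: mP_def torus_def)

lemma polyfun_Lp: "p \<in> polyfun \<Longrightarrow> p \<in> Lp r"
  unfolding Lp_def by (rule CollectI, rule bexI[of _ p], rule exI[of _ 0]) auto

lemma Lp_const: "(\<lambda>_. c) \<in> Lp r" by (rule polyfun_Lp[OF polyfun_const])
lemma Lp_var: "(\<lambda>z. z k) \<in> Lp r" by (rule polyfun_Lp[OF polyfun_var])

lemma Lp_add: assumes "f \<in> Lp r" "g \<in> Lp r" shows "(\<lambda>z. f z + g z) \<in> Lp r"
proof -
  obtain p N where p: "p \<in> polyfun" "\<forall>z\<in>torus r. f z * mP r z ^ N = p z" using assms(1) by (auto simp: Lp_def)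
  obtain q M where q: "q \<in> polyfun" "\<forall>z\<in>torus r. g z * mP r z ^ M = q z" using assms(2) by (auto simp: Lp_def)
  have "(\<lambda>z. p z * mP r z ^ M + q z * mP r z ^ N) \<in> polyfun"
    by (intro polyfun_add polyfun_mult polyfun_power p q mP_polyfun)
  moreover have "\<forall>z\<in>torus r. (f z + g z) * mP r z ^ (N + M) = p z * mP r z ^ M + q z * mP r z ^ N"
  proof
    fix z assume z: "z \<in> torus r"
    have "(f z + g z) * mP r z ^ (N + M) = (f z * mP r z ^ N) * mP r z ^ M + (g z * mP r z ^ M) * mP r z ^ N"
      by (simp add: power_add algebra_simps)
    then show "(f z + g z) * mP r z ^ (N + M) = p z * mP r z ^ M + q z * mP r z ^ N" using p q z by simp
  qed
  ultimately show ?thesis unfolding Lp_def by (intro CollectI bexI exI)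
qed

lemma Lp_mult: assumes "f \<in> Lp r" "g \<in> Lp r" shows "(\<lambda>z. f z * g z) \<in> Lp r"
proof -
  obtain p N where p: "p \<in> polyfun" "\<forall>z\<in>torus r. f z * mP r z ^ N = p z" using assms(1) by (auto simp: Lp_def)
  obtain q M where q: "q \<in> polyfun" "\<forall>z\<in>torus r. g z * mP r z ^ M = q z" using assms(2) by (auto simp: Lp_def)
  have "(\<lambda>z. p z * q z) \<in> polyfun"
    by (intro polyfun_mult p q)
  moreover have "\<forall>z\<in>torus r. (f z * g z) * mP r z ^ (N + M) = p z * q z"
  proof
    fix z assume z: "z \<in> torus r"
    have "(f z * g z) * mP r z ^ (N + M) = (f z * mP r z ^ N) * (g z * mP r z ^ M)"
      by (simp add: power_add algebra_simps)
    then show "(f z * g z) * mP r z ^ (N + M) = p z * q z" using p q z by simp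
  qed
  ultimately show ?thesis unfolding Lp_def by (intro CollectI bexI exI)
qed

lemma Lp_uminus: "f \<in> Lp r \<Longrightarrow> (\<lambda>z. - f z) \<in> Lp r"
  using Lp_mult[OF Lp_const[of "-1"], of f] by simp

lemma Lp_diff: "f \<in> Lp r \<Longrightarrow> g \<in> Lp r \<Longrightarrow> (\<lambda>z. f z - g z) \<in> Lp r"
  using Lp_add[OF _ Lp_uminus[of g], of f] by simp

lemma Lp_power: "f \<in> Lp r \<Longrightarrow> (\<lambda>z. f z ^ N) \<in> Lp r"
proof (induction N)
  case 0 then show ?case using Lp_const[of 1] by simp
next
  case (Suc N) then show ?case using Lp_mult[of f r "\<lambda>x. f x ^ N"] by simp
qed

lemma Lp_prod: "finite S \<Longrightarrow> (\<And>k. k \<in> S \<Longrightarrow> f k \<in> Lp r) \<Longrightarrow> (\<lambda>x. \<Prod>k\<in>S. f k x) \<in> Lp r"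
proof (induction S rule: finite_induct)
  case empty then show ?case using Lp_const[of 1] by simp
next
  case (insert a S)
  then show ?case using Lp_mult[of "f a" r "\<lambda>x. \<Prod>k\<in>S. f k x"] by simp
qed

lemma Lp_inv_var: assumes "k < r" shows "(\<lambda>z. inverse (z k)) \<in> Lp r"
proof -
  define q where "q = (\<lambda>z::nat\<Rightarrow>complex. \<Prod>j\<in>{..<r}-{k}. z j)"
  have "q \<in> polyfun" unfolding q_def by (rule polyfun_prod) (auto intro: polyfun_var)
  moreover have "\<forall>z\<in>torus r. inverse (z k) * mP r z ^ 1 = q z"
  proof
    fix z assume z: "z \<in> torus r"
    have "mP r z = z k * q z" unfolding mP_def q_def
      using assms by (subst prod.remove[of _ k]) auto
    moreover have "z k \<noteq> 0" using z assms by (auto simp: torus_def)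
    ultimately show "inverse (z k) * mP r z ^ 1 = q z" by simp
  qed
  ultimately show ?thesis unfolding Lp_def by blast
qed

lemma Lp_powi_var: assumes "k < r" shows "(\<lambda>z. z k powi c) \<in> Lp r"
proof (cases "c \<ge> 0")
  case True
  have "(\<lambda>z::nat\<Rightarrow>complex. z k powi c) = (\<lambda>z. z k ^ nat c)"
  proof (rule ext)
    fix z :: "nat \<Rightarrow> complex" show "z k powi c = z k ^ nat c" using True by (simp add: power_int_def)
  qed
  then show ?thesis using Lp_power[OF Lp_var[of k r], of "nat c"] by simp
next
  case False
  have "(\<lambda>z::nat\<Rightarrow>complex. z k powi c) = (\<lambda>z. (inverse (z k)) ^ nat (-c))"
  proof (rule ext)
    fix z :: "nat \<Rightarrow> complex" show "z k powi c = (inverse (z k)) ^ nat (-c)"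
      using False by (simp add: power_int_def power_inverse)
  qed
  then show ?thesis using Lp_power[OF Lp_inv_var[OF assms], of "nat (-c)"] by simp
qed

definition lmono :: "nat \<Rightarrow> (nat \<Rightarrow> int) \<Rightarrow> (nat \<Rightarrow> complex) \<Rightarrow> complex" where
  "lmono r c z = (\<Prod>k<r. z k powi c k)"

lemma Lp_lmono: "lmono r c \<in> Lp r"
proof -
  have "(\<lambda>z. \<Prod>k\<in>{..<r}. z k powi c k) \<in> Lp r" by (rule Lp_prod) (auto intro: Lp_powi_var)
  then show ?thesis by (simp add: lmono_def[abs_def])
qed

lemma Lp_zero_iff: assumes "f \<in> Lp r"
  obtains p where "p \<in> polyfun" "\<And>z. z \<in> torus r \<Longrightarrow> f z = 0 \<longleftrightarrow> p z = 0"
proof -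
  obtain p N where p: "p \<in> polyfun" "\<forall>z\<in>torus r. f z * mP r z ^ N = p z" using assms by (auto simp: Lp_def)
  show ?thesis
  proof (rule that[OF p(1)])
    fix z assume z: "z \<in> torus r"
    have e: "f z * mP r z ^ N = p z" using p(2) z by blast
    have "mP r z ^ N \<noteq> 0" using mP_nz[OF z] by simp
    then show "f z = 0 \<longleftrightarrow> p z = 0" using e by (metis mult_eq_0_iff)
  qed
qed

lemma powi_sum: "finite I \<Longrightarrow> (X::complex) \<noteq> 0 \<Longrightarrow> X powi (\<Sum>i\<in>I. f i) = (\<Prod>i\<in>I. X powi f i)"
proof (induction I rule: finite_induct)
  case empty then show ?case by simp
next
  case (insert a I)
  have "X powi (\<Sum>i\<in>insert a I. f i) = X powi (f a + (\<Sum>i\<in>I. f i))" by (simp only: sum.insert[OF insert(1,2)])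
  also have "\<dots> = X powi f a * X powi (\<Sum>i\<in>I. f i)" using insert(4) by (rule power_int_add[OF disjI1])
  also have "\<dots> = X powi f a * (\<Prod>i\<in>I. X powi f i)" by (simp only: insert(3)[OF insert(4)])
  also have "\<dots> = (\<Prod>i\<in>insert a I. X powi f i)" by (simp only: prod.insert[OF insert(1,2)])
  finally show ?case .
qed

lemma prod_powi: "finite I \<Longrightarrow> (\<Prod>i\<in>I. f i :: complex) powi c = (\<Prod>i\<in>I. f i powi c)"
  by (induction I rule: finite_induct) (auto simp: power_int_mult_distrib)



definition ind :: "nat \<times> nat \<Rightarrow> nat \<times> nat \<Rightarrow> int" where
  "ind e = (\<lambda>f. if f = e then 1 else 0)"

definition nzc :: "(nat \<times> nat) set \<Rightarrow> (nat \<Rightarrow> complex) \<Rightarrow> bool" where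
  "nzc G x \<longleftrightarrow> (\<forall>e\<in>G. x (fst e) - x (snd e) \<noteq> 0)"

lemma utilde_add:
  assumes "nzc G x"
  shows "utilde G (\<lambda>e. a e + b e) x = utilde G a x * utilde G b x"
proof -
  have "utilde G (\<lambda>e. a e + b e) x = (\<Prod>e\<in>G. (x (fst e) - x (snd e)) powi a e * (x (fst e) - x (snd e)) powi b e)"
    unfolding utilde_def
    by (rule prod.cong[OF refl], rule power_int_add) (use assms in \<open>auto simp: nzc_def\<close>)
  then show ?thesis by (simp add: utilde_def prod.distrib)
qed

lemma utilde_diff:
  assumes "nzc G x"
  shows "utilde G (\<lambda>e. a e - b e) x = utilde G a x / utilde G b x"
proof -
  have "utilde G (\<lambda>e. a e - b e) x = (\<Prod>e\<in>G. (x (fst e) - x (snd e)) powi a e / (x (fst e) - x (snd e)) powi b e)"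
    unfolding utilde_def
    by (rule prod.cong[OF refl], rule power_int_diff) (use assms in \<open>auto simp: nzc_def\<close>)
  then show ?thesis by (simp add: utilde_def prod_dividef)
qed

lemma utilde_ind:
  assumes "finite G" "e \<in> G"
  shows "utilde G (ind e) x = x (fst e) - x (snd e)"
proof -
  have "utilde G (ind e) x = (\<Prod>f\<in>G. if f = e then x (fst f) - x (snd f) else 1)"
    unfolding utilde_def ind_def by (rule prod.cong) auto
  also have "\<dots> = x (fst e) - x (snd e)" using assms by (simp add: prod.delta')
  finally show ?thesis .
qed

lemma utilde_nz: "finite G \<Longrightarrow> nzc G x \<Longrightarrow> utilde G u x \<noteq> 0"
  unfolding utilde_def nzc_def by (auto simp: prod_zero_iff)

lemma utilde_lin:
  assumes "finite G" "nzc G x" "finite I"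
  shows "utilde G (\<lambda>e. \<Sum>i\<in>I. c i * w i e) x = (\<Prod>i\<in>I. utilde G (w i) x powi c i)"
proof -
  have "utilde G (\<lambda>e. \<Sum>i\<in>I. c i * w i e) x = (\<Prod>e\<in>G. \<Prod>i\<in>I. ((x (fst e) - x (snd e)) powi w i e) powi c i)"
    unfolding utilde_def
  proof (rule prod.cong[OF refl])
    fix e assume e: "e \<in> G"
    have nz: "x (fst e) - x (snd e) \<noteq> 0" using assms(2) e by (auto simp: nzc_def)
    have "(x (fst e) - x (snd e)) powi (\<Sum>i\<in>I. c i * w i e) = (\<Prod>i\<in>I. (x (fst e) - x (snd e)) powi (c i * w i e))"
      by (rule powi_sum[OF assms(3) nz])
    also have "\<dots> = (\<Prod>i\<in>I. ((x (fst e) - x (snd e)) powi w i e) powi c i)"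
      by (rule prod.cong[OF refl]) (simp add: mult.commute[of "c _"] power_int_mult)
    finally show "(x (fst e) - x (snd e)) powi (\<Sum>i\<in>I. c i * w i e) = (\<Prod>i\<in>I. ((x (fst e) - x (snd e)) powi w i e) powi c i)" .
  qed
  also have "\<dots> = (\<Prod>i\<in>I. \<Prod>e\<in>G. ((x (fst e) - x (snd e)) powi w i e) powi c i)"
    by (rule prod.swap)
  also have "\<dots> = (\<Prod>i\<in>I. utilde G (w i) x powi c i)"
    unfolding utilde_def by (rule prod.cong[OF refl]) (simp add: prod_powi[OF assms(1)])
  finally show ?thesis .
qed

lemma frac_aux: "A\<noteq>0 \<Longrightarrow> B\<noteq>0 \<Longrightarrow> C\<noteq>0 \<Longrightarrow> D\<noteq>0 \<Longrightarrow> p\<noteq>0 \<Longrightarrow>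
   (q::complex)/A/B/p*C*D = ((-q)/(A*B))/((-p)/(C*D))"
  by (simp add: field_simps)

section \<open>Setting with a universal vertex\<close>

locale UV =
  fixes n :: nat and G :: "(nat \<times> nat) set" and v :: nat
  assumes n4: "n \<ge> 4" and sgG: "simple_graph n G" and uvv: "universal_vertex n G v"
begin

definition W :: "nat set" where "W = {..<n} - {v}"
definition Gp :: "(nat \<times> nat) set" where "Gp = {e \<in> G. fst e \<noteq> v \<and> snd e \<noteq> v}"
definition sgn :: "nat \<Rightarrow> complex" where "sgn a = (if a < v then 1 else -1)"
definition yv :: "(nat \<Rightarrow> complex) \<Rightarrow> nat \<Rightarrow> complex" where "yv x a = 1 / (x a - x v)"

lemma Gsub: "e \<in> G \<Longrightarrow> fst e < snd e \<and> snd e < n"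
  using sgG by (auto simp: simple_graph_def)

lemma finG: "finite G"
proof -
  have "G \<subseteq> {..<n} \<times> {..<n}" using Gsub by force
  then show ?thesis by (rule finite_subset) auto
qed

lemma v_lt: "v < n" using uvv by (simp add: universal_vertex_def)

lemma edge_av: "a < n \<Longrightarrow> a \<noteq> v \<Longrightarrow> edge a v \<in> G"
  using uvv by (auto simp: universal_vertex_def edge_def min.commute max.commute)

lemma edge_in_G_iff: "e \<in> G \<Longrightarrow> edge i j = e \<longleftrightarrow> (i = fst e \<and> j = snd e) \<or> (i = snd e \<and> j = fst e)"
  using Gsub[of e] by (cases e) (auto simp: edge_def min_def max_def)

lemma edge_of_G: "e \<in> G \<Longrightarrow> edge (fst e) (snd e) = e"
  using Gsub[of e] by (cases e) (auto simp: edge_def min_def max_def)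

lemma conf_nzc: "x \<in> conf n \<Longrightarrow> nzc G x"
  using Gsub by (fastforce simp: conf_def nzc_def)

lemma X_av: "x (fst (edge a v)) - x (snd (edge a v)) = (if a = v then 0 else sgn a * (x a - x v))"
  by (auto simp: edge_def sgn_def min_def max_def)

lemma sgn_sq: "sgn a * sgn a = 1" by (simp add: sgn_def)
lemma sgn_nz: "sgn a \<noteq> 0" by (simp add: sgn_def)

lemma W_iff: "a \<in> W \<longleftrightarrow> a < n \<and> a \<noteq> v" by (auto simp: W_def)

lemma Gp_W: "e \<in> Gp \<Longrightarrow> fst e \<in> W \<and> snd e \<in> W \<and> fst e < snd e \<and> e \<in> G"
  using Gsub[of e] by (auto simp: Gp_def W_def)

lemma yv_nz: "x \<in> conf n \<Longrightarrow> a \<in> W \<Longrightarrow> yv x a \<noteq> 0"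
  using v_lt by (auto simp: yv_def conf_def W_def)

lemma xv_ne: "x \<in> conf n \<Longrightarrow> a \<in> W \<Longrightarrow> x a - x v \<noteq> 0"
  using v_lt by (auto simp: conf_def W_def)

lemma yv_inj: "x \<in> conf n \<Longrightarrow> a \<in> W \<Longrightarrow> b \<in> W \<Longrightarrow> a \<noteq> b \<Longrightarrow> yv x a \<noteq> yv x b"
proof
  assume x: "x \<in> conf n" and ab: "a \<in> W" "b \<in> W" "a \<noteq> b" and eq: "yv x a = yv x b"
  have "x a - x v \<noteq> 0" "x b - x v \<noteq> 0" using xv_ne[OF x] ab by auto
  then have "x a - x v = x b - x v" using eq by (simp add: yv_def)
  then have "x a = x b" by simp
  then show False using x ab by (auto simp: conf_def W_def)
qed

lemma x_from_yv: "x \<in> conf n \<Longrightarrow> a \<in> W \<Longrightarrow> x a = x v + 1 / yv x a"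
  using xv_ne[of x a] by (simp add: yv_def)

definition uef :: "nat \<Rightarrow> nat \<Rightarrow> nat \<Rightarrow> nat \<Rightarrow> nat \<times> nat \<Rightarrow> int" where
  "uef a b c d = (\<lambda>f. ind (a,b) f - ind (edge a v) f - ind (edge b v) f - ind (c,d) f
                      + ind (edge c v) f + ind (edge d v) f)"

lemma sgn_div: "X / (sgn a * A) = sgn a * (X / A)"
  by (simp add: sgn_def)

lemma utilde_uef:
  assumes e: "(a,b) \<in> Gp" and f: "(c,d) \<in> Gp" and x: "x \<in> conf n"
  shows "utilde G (uef a b c d) x = sgn a * sgn b * sgn c * sgn d * ((yv x a - yv x b) / (yv x c - yv x d))"
proof -
  have nz: "nzc G x" by (rule conf_nzc[OF x])
  have W: "a \<in> W" "b \<in> W" "c \<in> W" "d \<in> W" "a \<noteq> b" "c \<noteq> d" using Gp_W[OF e] Gp_W[OF f] by auto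
  have inG: "(a,b) \<in> G" "(c,d) \<in> G" "edge a v \<in> G" "edge b v \<in> G" "edge c v \<in> G" "edge d v \<in> G"
    using Gp_W[OF e] Gp_W[OF f] W by (auto simp: W_iff intro: edge_av)
  have "utilde G (uef a b c d) x = (x a - x b) / (sgn a * (x a - x v)) / (sgn b * (x b - x v)) / (x c - x d)
        * (sgn c * (x c - x v)) * (sgn d * (x d - x v))"
    unfolding uef_def
    by (simp only: utilde_add[OF nz] utilde_diff[OF nz] utilde_ind[OF finG] inG X_av W(1-4)[unfolded W_iff] fst_conv snd_conv if_False)
  also have "\<dots> = sgn a * sgn b * sgn c * sgn d * ((x a - x b) / (x a - x v) / (x b - x v) / (x c - x d)
        * (x c - x v) * (x d - x v))"
    by (simp add: sgn_div ac_simps times_divide_eq_left)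
  also have "(x a - x b) / (x a - x v) / (x b - x v) / (x c - x d) * (x c - x v) * (x d - x v)
     = (yv x a - yv x b) / (yv x c - yv x d)"
  proof -
    have A: "x a - x v \<noteq> 0" "x b - x v \<noteq> 0" "x c - x v \<noteq> 0" "x d - x v \<noteq> 0"
      using xv_ne[OF x] W by auto
    have cd: "x c - x d \<noteq> 0" using conf_nzc[OF x] inG(2) by (auto simp: nzc_def)
    have h1: "yv x a - yv x b = (x b - x a) / ((x a - x v) * (x b - x v))"
      using A by (simp add: yv_def field_simps)
    have h2: "yv x c - yv x d = (x d - x c) / ((x c - x v) * (x d - x v))"
      using A by (simp add: yv_def field_simps)
    have cd': "x d - x c \<noteq> 0" using cd by (metis right_minus_eq)
    show ?thesis unfolding h1 h2 using frac_aux[OF A cd, of "x a - x b"] by simp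
  qed
  finally show ?thesis .
qed

lemma nbrs_finite: "finite (nbrs n G i)"
  by (rule finite_subset[of _ "{..<n}"]) (auto simp: nbrs_def)

lemma rowsum_ind:
  assumes "f \<in> G" "i < n"
  shows "(\<Sum>j\<in>nbrs n G i. ind f (edge i j)) = (if i = fst f then 1 else 0) + (if i = snd f then 1 else 0)"
proof -
  obtain p q where f: "f = (p,q)" by (cases f)
  have pq: "p < q" "q < n" using Gsub[OF assms(1)] f by auto
  have "\<And>j. ind f (edge i j) = (if i = p then (if j = q then 1 else 0) else if i = q then (if j = p then 1 else 0) else 0)"
    using pq f by (auto simp: ind_def edge_def min_def max_def)
  then have "(\<Sum>j\<in>nbrs n G i. ind f (edge i j)) =
     (\<Sum>j\<in>nbrs n G i. (if i = p then (if j = q then 1 else 0) else if i = q then (if j = p then 1 else 0) else 0))"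
    by simp
  also have "\<dots> = (if i = p then 1 else 0) + (if i = q then 1 else 0)"
  proof -
    have q_in: "i = p \<Longrightarrow> q \<in> nbrs n G i" using pq assms f edge_of_G[OF assms(1)] by (auto simp: nbrs_def)
    have p_in: "i = q \<Longrightarrow> p \<in> nbrs n G i" using pq assms f edge_of_G[OF assms(1)]
      by (auto simp: nbrs_def edge_def min_def max_def)
    show ?thesis using pq q_in p_in nbrs_finite[of i] by (auto simp: sum.delta)
  qed
  finally show ?thesis using f by simp
qed

lemma uef_lattice:
  assumes e: "(a,b) \<in> Gp" and f: "(c,d) \<in> Gp"
  shows "uef a b c d \<in> kin_lattice n G"
proof -
  have W: "a \<in> W" "b \<in> W" "c \<in> W" "d \<in> W" "a \<noteq> b" "c \<noteq> d" using Gp_W[OF e] Gp_W[OF f] by auto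
  have inG: "(a,b) \<in> G" "(c,d) \<in> G" "edge a v \<in> G" "edge b v \<in> G" "edge c v \<in> G" "edge d v \<in> G"
    using Gp_W[OF e] Gp_W[OF f] W by (auto simp: W_iff intro: edge_av)
  have supp: "\<forall>g. g \<notin> G \<longrightarrow> uef a b c d g = 0"
    using inG unfolding uef_def ind_def by auto
  have fe: "\<And>p. p \<noteq> v \<Longrightarrow> fst (edge p v) = min p v \<and> snd (edge p v) = max p v" by (simp add: edge_def)
  have rows: "\<forall>i<n. (\<Sum>j\<in>nbrs n G i. uef a b c d (edge i j)) = 0"
  proof (intro allI impI)
    fix i assume i: "i < n"
    have "(\<Sum>j\<in>nbrs n G i. uef a b c d (edge i j)) =
      (\<Sum>j\<in>nbrs n G i. ind (a,b) (edge i j)) - (\<Sum>j\<in>nbrs n G i. ind (edge a v) (edge i j))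
      - (\<Sum>j\<in>nbrs n G i. ind (edge b v) (edge i j)) - (\<Sum>j\<in>nbrs n G i. ind (c,d) (edge i j))
      + (\<Sum>j\<in>nbrs n G i. ind (edge c v) (edge i j)) + (\<Sum>j\<in>nbrs n G i. ind (edge d v) (edge i j))"
      unfolding uef_def by (simp add: sum.distrib sum_subtractf)
    also have "\<dots> = 0"
      unfolding rowsum_ind[OF inG(1) i] rowsum_ind[OF inG(2) i] rowsum_ind[OF inG(3) i]
        rowsum_ind[OF inG(4) i] rowsum_ind[OF inG(5) i] rowsum_ind[OF inG(6) i]
      using W by (auto simp: edge_def min_def max_def W_iff)
    finally show "(\<Sum>j\<in>nbrs n G i. uef a b c d (edge i j)) = 0" .
  qed
  show ?thesis using supp rows by (simp add: kin_lattice_def)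
qed

end



lemma ind_apply: "ind e g = (if g = e then 1 else 0)" by (simp add: ind_def)

context UV begin

lemma edge_v_inj: "a \<noteq> v \<Longrightarrow> p \<noteq> v \<Longrightarrow> edge a v = edge p v \<longleftrightarrow> a = p"
  by (auto simp: edge_def min_def max_def split: if_splits)

lemma edge_v_notGp: "edge a v \<notin> Gp"
  by (auto simp: Gp_def edge_def min_def max_def)

lemma G_cases: assumes g: "g \<in> G" shows "g \<in> Gp \<or> (\<exists>p\<in>W. g = edge p v)"
proof -
  obtain a b where ab: "g = (a,b)" by (cases g)
  have lt: "a < b" "b < n" using Gsub[OF g] ab by auto
  show ?thesis
  proof (cases "a = v")
    case True
    then have "b \<in> W" "g = edge b v" using lt ab by (auto simp: W_iff edge_def)
    then show ?thesis by blast
  next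
    case False
    show ?thesis
    proof (cases "b = v")
      case True
      then have "a \<in> W" "g = edge a v" using lt ab by (auto simp: W_iff edge_def)
      then show ?thesis by blast
    next
      case False2: False
      then show ?thesis using False g ab by (auto simp: Gp_def)
    qed
  qed
qed

lemma nbrs_edge: "e \<in> Gp \<Longrightarrow> fst e = p \<Longrightarrow> snd e \<in> nbrs n G p - {v} \<and> edge p (snd e) = e"
  using Gp_W[of e] edge_of_G[of e] by (auto simp: nbrs_def W_iff)

lemma nbrs_edge2: "e \<in> Gp \<Longrightarrow> snd e = p \<Longrightarrow> fst e \<in> nbrs n G p - {v} \<and> edge p (fst e) = e"
  using Gp_W[of e] edge_of_G[of e] by (auto simp: nbrs_def W_iff edge_def min_def max_def)

lemma row_p:
  assumes w: "w \<in> kin_lattice n G" and p: "p \<in> W"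
  shows "(\<Sum>e\<in>{e\<in>Gp. fst e = p \<or> snd e = p}. w e) = - w (edge p v)"
proof -
  have pn: "p < n" "p \<noteq> v" using p by (auto simp: W_iff)
  have vin: "v \<in> nbrs n G p" using pn edge_av[OF pn] v_lt by (auto simp: nbrs_def)
  have row: "(\<Sum>j\<in>nbrs n G p. w (edge p j)) = 0" using w pn by (auto simp: kin_lattice_def)
  have "(\<Sum>j\<in>nbrs n G p. w (edge p j)) = w (edge p v) + (\<Sum>j\<in>nbrs n G p - {v}. w (edge p j))"
    using vin nbrs_finite by (simp add: sum.remove)
  then have A: "(\<Sum>j\<in>nbrs n G p - {v}. w (edge p j)) = - w (edge p v)" using row by simp
  have bij: "bij_betw (edge p) (nbrs n G p - {v}) {e\<in>Gp. fst e = p \<or> snd e = p}"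
  proof (rule bij_betwI')
    fix j j' assume "j \<in> nbrs n G p - {v}" "j' \<in> nbrs n G p - {v}"
    then show "(edge p j = edge p j') = (j = j')" by (auto simp: nbrs_def edge_def min_def max_def split: if_splits)
  next
    fix j assume j: "j \<in> nbrs n G p - {v}"
    then show "edge p j \<in> {e \<in> Gp. fst e = p \<or> snd e = p}"
      using pn by (auto simp: nbrs_def Gp_def edge_def min_def max_def)
  next
    fix e assume e: "e \<in> {e \<in> Gp. fst e = p \<or> snd e = p}"
    show "\<exists>j\<in>nbrs n G p - {v}. e = edge p j"
      using e nbrs_edge[of e p] nbrs_edge2[of e p] by (metis (mono_tags, lifting) mem_Collect_eq)
  qed
  have "(\<Sum>j\<in>nbrs n G p - {v}. w (edge p j)) = (\<Sum>e\<in>{e\<in>Gp. fst e = p \<or> snd e = p}. w e)"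
    by (rule sum.reindex_bij_betw[OF bij])
  then show ?thesis using A by simp
qed

lemma finGp: "finite Gp" using finG by (simp add: Gp_def)

lemma lat_expand:
  assumes w: "w \<in> kin_lattice n G" and f0: "(c,d) \<in> Gp"
  shows "w = (\<lambda>g. \<Sum>e\<in>Gp. w e * uef (fst e) (snd e) c d g)"
proof -
  define S where "S = (\<Sum>e\<in>Gp. w e)"
  define t0 where "t0 = (\<lambda>g. ind (c,d) g - ind (edge c v) g - ind (edge d v) g)"
  have step1: "(\<Sum>e\<in>Gp. w e * uef (fst e) (snd e) c d g) = w g - S * t0 g" for g
  proof -
    have "(\<Sum>e\<in>Gp. w e * uef (fst e) (snd e) c d g) =
        (\<Sum>e\<in>Gp. w e * ind e g) - (\<Sum>e\<in>Gp. w e * (ind (edge (fst e) v) g + ind (edge (snd e) v) g)) - S * t0 g"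
      unfolding uef_def t0_def S_def
      by (simp add: sum_subtractf sum.distrib sum_distrib_right algebra_simps)
    also have "(\<Sum>e\<in>Gp. w e * ind e g) - (\<Sum>e\<in>Gp. w e * (ind (edge (fst e) v) g + ind (edge (snd e) v) g)) = w g"
    proof (cases "g \<in> Gp")
      case True
      have "(\<Sum>e\<in>Gp. w e * ind e g) = (\<Sum>e\<in>Gp. if e = g then w g else 0)"
        by (rule sum.cong) (auto simp: ind_apply)
      also have "\<dots> = w g" using True finGp by simp
      finally have "(\<Sum>e\<in>Gp. w e * ind e g) = w g" .
      moreover have "(\<Sum>e\<in>Gp. w e * (ind (edge (fst e) v) g + ind (edge (snd e) v) g)) = 0"
        using True edge_v_notGp by (auto simp: ind_apply intro!: sum.neutral)
      ultimately show ?thesis by simp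
    next
      case False
      have z1: "(\<Sum>e\<in>Gp. w e * ind e g) = 0" using False by (auto simp: ind_apply intro!: sum.neutral)
      show ?thesis
      proof (cases "\<exists>p\<in>W. g = edge p v")
        case True
        then obtain p where p: "p \<in> W" "g = edge p v" by blast
        have "(\<Sum>e\<in>Gp. w e * (ind (edge (fst e) v) g + ind (edge (snd e) v) g)) =
              (\<Sum>e\<in>Gp. if fst e = p \<or> snd e = p then w e else 0)"
        proof (rule sum.cong[OF refl])
          fix e assume e: "e \<in> Gp"
          have ne: "fst e \<noteq> v" "snd e \<noteq> v" "fst e \<noteq> snd e" "p \<noteq> v" using Gp_W[OF e] p by (auto simp: W_iff)
          show "w e * (ind (edge (fst e) v) g + ind (edge (snd e) v) g) = (if fst e = p \<or> snd e = p then w e else 0)"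
            using ne unfolding p(2) ind_apply by (auto simp: edge_v_inj)
        qed
        also have "\<dots> = (\<Sum>e\<in>{e\<in>Gp. fst e = p \<or> snd e = p}. w e)"
          using finGp by (simp add: sum.inter_filter)
        also have "\<dots> = - w g" using row_p[OF w p(1)] p(2) by simp
        finally show ?thesis using z1 by simp
      next
        case False2: False
        have "g \<notin> G" using G_cases[of g] False False2 by blast
        then have "w g = 0" using w unfolding kin_lattice_def by blast
        moreover have "(\<Sum>e\<in>Gp. w e * (ind (edge (fst e) v) g + ind (edge (snd e) v) g)) = 0"
        proof (rule sum.neutral, rule ballI)
          fix e assume e: "e \<in> Gp"
          have "fst e \<in> W" "snd e \<in> W" using Gp_W[OF e] by auto
          then have "g \<noteq> edge (fst e) v" "g \<noteq> edge (snd e) v" using False2 by auto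
          then show "w e * (ind (edge (fst e) v) g + ind (edge (snd e) v) g) = 0" by (simp add: ind_apply)
        qed
        ultimately show ?thesis using z1 by simp
      qed
    qed
    finally show ?thesis .
  qed
  have cdW: "c \<in> W" "d \<in> W" "c \<noteq> d" using Gp_W[OF f0] by auto
  have cdG: "(c,d) \<in> G" "edge c v \<in> G" "edge d v \<in> G" using Gp_W[OF f0] cdW by (auto simp: W_iff intro: edge_av)
  have rv: "(\<Sum>j\<in>nbrs n G v. w (edge v j)) = 0" using w v_lt by (auto simp: kin_lattice_def)
  have rv2: "(\<Sum>j\<in>nbrs n G v. (\<Sum>e\<in>Gp. w e * uef (fst e) (snd e) c d (edge v j))) = 0"
  proof -
    have "(\<Sum>j\<in>nbrs n G v. (\<Sum>e\<in>Gp. w e * uef (fst e) (snd e) c d (edge v j)))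
        = (\<Sum>e\<in>Gp. w e * (\<Sum>j\<in>nbrs n G v. uef (fst e) (snd e) c d (edge v j)))"
      by (simp add: sum.swap[of _ "nbrs n G v"] sum_distrib_left)
    also have "\<dots> = 0"
    proof (rule sum.neutral, rule ballI)
      fix e assume e: "e \<in> Gp"
      have "(fst e, snd e) \<in> Gp" using e by simp
      then have "uef (fst e) (snd e) c d \<in> kin_lattice n G" using uef_lattice f0 by blast
      then show "w e * (\<Sum>j\<in>nbrs n G v. uef (fst e) (snd e) c d (edge v j)) = 0"
        using v_lt by (auto simp: kin_lattice_def)
    qed
    finally show ?thesis .
  qed
  have rt0: "(\<Sum>j\<in>nbrs n G v. t0 (edge v j)) = -2"
  proof -
    have "(\<Sum>j\<in>nbrs n G v. t0 (edge v j)) = (\<Sum>j\<in>nbrs n G v. ind (c,d) (edge v j))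
       - (\<Sum>j\<in>nbrs n G v. ind (edge c v) (edge v j)) - (\<Sum>j\<in>nbrs n G v. ind (edge d v) (edge v j))"
      unfolding t0_def by (simp add: sum_subtractf)
    also have "\<dots> = -2"
      unfolding rowsum_ind[OF cdG(1) v_lt] rowsum_ind[OF cdG(2) v_lt] rowsum_ind[OF cdG(3) v_lt]
      using cdW by (auto simp: edge_def min_def max_def W_iff)
    finally show ?thesis .
  qed
  have "(\<Sum>j\<in>nbrs n G v. (\<Sum>e\<in>Gp. w e * uef (fst e) (snd e) c d (edge v j))) =
        (\<Sum>j\<in>nbrs n G v. w (edge v j)) - S * (\<Sum>j\<in>nbrs n G v. t0 (edge v j))"
    unfolding step1 by (simp add: sum_subtractf sum_distrib_left)
  then have "S = 0" using rv rv2 rt0 by simp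
  then show ?thesis using step1 by (intro ext) simp
qed

end

locale UVB = UV +
  fixes r :: nat and u :: "nat \<Rightarrow> nat \<times> nat \<Rightarrow> int"
  assumes basis: "is_lattice_basis n G r u"
begin

abbreviation F where "F \<equiv> Phi G r u"

lemma u_lat: "k < r \<Longrightarrow> u k \<in> kin_lattice n G"
  using basis by (simp add: is_lattice_basis_def)

lemma span: "w \<in> kin_lattice n G \<Longrightarrow> \<exists>c. w = (\<lambda>e. \<Sum>k<r. c k * u k e)"
  using basis by (simp add: is_lattice_basis_def)

lemma indep: "(\<And>e. (\<Sum>k<r. c k * u k e) = 0) \<Longrightarrow> k < r \<Longrightarrow> c k = 0"
  using basis unfolding is_lattice_basis_def by blast

lemma coeff_unique:
  assumes "(\<lambda>e. \<Sum>k<r. c k * u k e) = (\<lambda>e. \<Sum>k<r. c' k * u k e)" "k < r"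
  shows "c k = c' k"
proof -
  have "(\<Sum>k<r. (c k - c' k) * u k e) = 0" for e
  proof -
    have "(\<Sum>k<r. c k * u k e) = (\<Sum>k<r. c' k * u k e)" using assms(1) by meson
    then show ?thesis by (simp add: left_diff_distrib sum_subtractf)
  qed
  then have "c k - c' k = 0" using indep[of "\<lambda>k. c k - c' k"] assms(2) by blast
  then show ?thesis by simp
qed

lemma Phi_torus: "x \<in> conf n \<Longrightarrow> F x \<in> torus r"
  using utilde_nz[OF finG conf_nzc] by (auto simp: torus_def Phi_def)

lemma utilde_basis: "x \<in> conf n \<Longrightarrow> utilde G (\<lambda>e. \<Sum>k<r. c k * u k e) x = lmono r c (F x)"
  by (simp add: utilde_lin[OF finG conf_nzc] lmono_def Phi_def)

end



definition DDf :: "complex \<Rightarrow> complex \<Rightarrow> complex \<Rightarrow> complex \<Rightarrow> complex" where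
  "DDf \<rho> xv a b = - \<rho> * (a - b) / ((a - xv) * (b - xv))"

lemma c1: fixes xi xj xk xl xv :: complex
  assumes "xi \<noteq> xj" "xi \<noteq> xk" "xi \<noteq> xl" "xj \<noteq> xk" "xj \<noteq> xl" "xk \<noteq> xl" "xi \<noteq> xv" "xj \<noteq> xv" "xk \<noteq> xv" "xl \<noteq> xv"
  shows "((xi - xk) * (xj - xl)) / ((xi - xl) * (xj - xk)) * (DDf \<rho> xv xi xl * DDf \<rho> xv xj xk) = DDf \<rho> xv xi xk * DDf \<rho> xv xj xl"
  using assms unfolding DDf_def by (simp add: divide_simps; simp add: algebra_simps)
lemma c2: fixes xi xj xk xv :: complex
  assumes "xi \<noteq> xj" "xi \<noteq> xk" "xj \<noteq> xk" "xi \<noteq> xv" "xj \<noteq> xv" "xk \<noteq> xv"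
  shows "((xi - xk) * (xj - xv)) / ((xi - xv) * (xj - xk)) * DDf \<rho> xv xk xj = DDf \<rho> xv xk xi"
  using assms unfolding DDf_def by (simp add: divide_simps; simp add: algebra_simps)
lemma c3: fixes xl xj xk xv :: complex
  assumes "xl \<noteq> xj" "xl \<noteq> xk" "xj \<noteq> xk" "xl \<noteq> xv" "xj \<noteq> xv" "xk \<noteq> xv"
  shows "((xv - xk) * (xj - xl)) / ((xv - xl) * (xj - xk)) * DDf \<rho> xv xk xj = DDf \<rho> xv xl xj"
  using assms unfolding DDf_def by (simp add: divide_simps; simp add: algebra_simps)
lemma c4: fixes xi xl xk xv :: complex
  assumes "xi \<noteq> xl" "xi \<noteq> xk" "xl \<noteq> xk" "xi \<noteq> xv" "xl \<noteq> xv" "xk \<noteq> xv"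
  shows "((xi - xk) * (xv - xl)) / ((xi - xl) * (xv - xk)) * DDf \<rho> xv xl xi = DDf \<rho> xv xk xi"
  using assms unfolding DDf_def by (simp add: divide_simps; simp add: algebra_simps)
lemma c5: fixes xi xj xl xv :: complex
  assumes "xi \<noteq> xj" "xi \<noteq> xl" "xj \<noteq> xl" "xi \<noteq> xv" "xj \<noteq> xv" "xl \<noteq> xv"
  shows "((xi - xv) * (xj - xl)) / ((xi - xl) * (xj - xv)) * DDf \<rho> xv xl xi = DDf \<rho> xv xl xj"
  using assms unfolding DDf_def by (simp add: divide_simps; simp add: algebra_simps)

lemma lmono_lin:
  assumes "finite S" "z \<in> torus r"
  shows "(\<Prod>e\<in>S. (lmono r (c e) z) powi (m e)) = lmono r (\<lambda>j. \<Sum>e\<in>S. m e * c e j) z"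
proof -
  have "lmono r (\<lambda>j. \<Sum>e\<in>S. m e * c e j) z = (\<Prod>j<r. \<Prod>e\<in>S. (z j powi c e j) powi m e)"
    unfolding lmono_def
  proof (rule prod.cong[OF refl])
    fix j assume j: "j \<in> {..<r}"
    have nz: "z j \<noteq> 0" using assms(2) j by (auto simp: torus_def)
    have "z j powi (\<Sum>e\<in>S. m e * c e j) = (\<Prod>e\<in>S. z j powi (m e * c e j))"
      by (rule powi_sum[OF assms(1) nz])
    also have "\<dots> = (\<Prod>e\<in>S. (z j powi c e j) powi m e)"
      by (rule prod.cong[OF refl]) (simp add: mult.commute[of "m _"] power_int_mult)
    finally show "z j powi (\<Sum>e\<in>S. m e * c e j) = (\<Prod>e\<in>S. (z j powi c e j) powi m e)" .
  qed
  also have "\<dots> = (\<Prod>e\<in>S. \<Prod>j<r. (z j powi c e j) powi m e)" by (rule prod.swap)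
  also have "\<dots> = (\<Prod>e\<in>S. (lmono r (c e) z) powi (m e))"
    unfolding lmono_def by (rule prod.cong[OF refl]) (simp add: prod_powi)
  finally show ?thesis by simp
qed

context UV begin

definition conn :: bool where
  "conn \<longleftrightarrow> (\<forall>K. (\<forall>e\<in>Gp. fst e \<in> K \<longleftrightarrow> snd e \<in> K) \<longrightarrow> W \<subseteq> K \<or> W \<inter> K = {})"

end

locale UVC = UVB +
  fixes c0 d0 :: nat
  assumes f0: "(c0, d0) \<in> Gp" and connG: "conn"
begin

lemma f0W: "c0 \<in> W" "d0 \<in> W" "c0 \<noteq> d0" using Gp_W[OF f0] by auto

definition ce :: "nat \<times> nat \<Rightarrow> nat \<Rightarrow> int" where
  "ce e = (SOME c. uef (fst e) (snd e) c0 d0 = (\<lambda>g. \<Sum>k<r. c k * u k g))"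

lemma ce_prop: "e \<in> Gp \<Longrightarrow> uef (fst e) (snd e) c0 d0 = (\<lambda>g. \<Sum>k<r. ce e k * u k g)"
proof -
  assume e: "e \<in> Gp"
  then have "(fst e, snd e) \<in> Gp" by simp
  then have "uef (fst e) (snd e) c0 d0 \<in> kin_lattice n G" using uef_lattice f0 by blast
  then have "\<exists>c. uef (fst e) (snd e) c0 d0 = (\<lambda>g. \<Sum>k<r. c k * u k g)" by (rule span)
  then show ?thesis unfolding ce_def by (rule someI_ex)
qed

definition sig :: "nat \<times> nat \<Rightarrow> complex" where
  "sig e = sgn (fst e) * sgn (snd e) * sgn c0 * sgn d0"

lemma sig_sq: "sig e * sig e = 1"
  unfolding sig_def using sgn_sq[of "fst e"] sgn_sq[of "snd e"] sgn_sq[of c0] sgn_sq[of d0]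
  by (simp add: algebra_simps)

definition M :: "nat \<times> nat \<Rightarrow> (nat \<Rightarrow> complex) \<Rightarrow> complex" where
  "M e z = sig e * lmono r (ce e) z"

lemma M_Lp: "M e \<in> Lp r"
proof -
  have "(\<lambda>z. sig e * lmono r (ce e) z) \<in> Lp r" by (rule Lp_mult[OF Lp_const Lp_lmono])
  then show ?thesis by (simp add: M_def[abs_def])
qed

lemma M_eq:
  assumes e: "e \<in> Gp" and x: "x \<in> conf n"
  shows "(yv x (fst e) - yv x (snd e)) / (yv x c0 - yv x d0) = M e (F x)"
proof -
  have e': "(fst e, snd e) \<in> Gp" using e by simp
  have "utilde G (uef (fst e) (snd e) c0 d0) x = sig e * ((yv x (fst e) - yv x (snd e)) / (yv x c0 - yv x d0))"
    unfolding sig_def by (rule utilde_uef[OF e' f0 x])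
  moreover have "utilde G (uef (fst e) (snd e) c0 d0) x = lmono r (ce e) (F x)"
    unfolding ce_prop[OF e] by (rule utilde_basis[OF x])
  ultimately have "sig e * (sig e * ((yv x (fst e) - yv x (snd e)) / (yv x c0 - yv x d0))) = sig e * lmono r (ce e) (F x)"
    by simp
  then show ?thesis unfolding M_def by (simp add: mult.assoc[symmetric] sig_sq)
qed

lemma D0_nz: "x \<in> conf n \<Longrightarrow> yv x c0 - yv x d0 \<noteq> 0"
  using yv_inj[of x c0 d0] f0W by auto

lemma PP_ex: "b \<in> W \<Longrightarrow> \<exists>P. P \<in> Lp r \<and> (\<forall>x\<in>conf n. (yv x b - yv x c0) / (yv x c0 - yv x d0) = P (F x))"
proof -
  assume bW: "b \<in> W"
  define K where "K = {b. \<exists>P. P \<in> Lp r \<and> (\<forall>x\<in>conf n. (yv x b - yv x c0) / (yv x c0 - yv x d0) = P (F x))}"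
  have cl: "\<forall>e\<in>Gp. fst e \<in> K \<longleftrightarrow> snd e \<in> K"
  proof
    fix e assume e: "e \<in> Gp"
    have split: "(yv x (snd e) - yv x c0) / D = (yv x (fst e) - yv x c0) / D - (yv x (fst e) - yv x (snd e)) / D" for x D
      by (simp add: diff_divide_distrib)
    show "fst e \<in> K \<longleftrightarrow> snd e \<in> K"
    proof
      assume "fst e \<in> K"
      then obtain P where P: "P \<in> Lp r" "\<forall>x\<in>conf n. (yv x (fst e) - yv x c0) / (yv x c0 - yv x d0) = P (F x)"
        unfolding K_def by blast
      have "(\<lambda>z. P z - M e z) \<in> Lp r" by (rule Lp_diff[OF P(1) M_Lp])
      moreover have "\<forall>x\<in>conf n. (yv x (snd e) - yv x c0) / (yv x c0 - yv x d0) = P (F x) - M e (F x)"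
        using P(2) M_eq[OF e] split by simp
      ultimately show "snd e \<in> K" unfolding K_def by blast
    next
      assume "snd e \<in> K"
      then obtain P where P: "P \<in> Lp r" "\<forall>x\<in>conf n. (yv x (snd e) - yv x c0) / (yv x c0 - yv x d0) = P (F x)"
        unfolding K_def by blast
      have "(\<lambda>z. P z + M e z) \<in> Lp r" by (rule Lp_add[OF P(1) M_Lp])
      moreover have "\<forall>x\<in>conf n. (yv x (fst e) - yv x c0) / (yv x c0 - yv x d0) = P (F x) + M e (F x)"
        using P(2) M_eq[OF e] split by (metis diff_add_cancel add.commute)
      ultimately show "fst e \<in> K" unfolding K_def by blast
    qed
  qed
  have "c0 \<in> K" unfolding K_def by (rule CollectI, rule exI[of _ "\<lambda>_. 0"]) (simp add: Lp_const)
  then have "W \<subseteq> K" using connG cl f0W unfolding conn_def by blast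
  then show ?thesis using bW unfolding K_def by blast
qed

definition PP :: "nat \<Rightarrow> (nat \<Rightarrow> complex) \<Rightarrow> complex" where
  "PP b = (SOME P. P \<in> Lp r \<and> (\<forall>x\<in>conf n. (yv x b - yv x c0) / (yv x c0 - yv x d0) = P (F x)))"

lemma PP_prop: "b \<in> W \<Longrightarrow> PP b \<in> Lp r \<and> (\<forall>x\<in>conf n. (yv x b - yv x c0) / (yv x c0 - yv x d0) = PP b (F x))"
  unfolding PP_def by (rule someI_ex[OF PP_ex])

definition Dz :: "nat \<Rightarrow> nat \<Rightarrow> (nat \<Rightarrow> complex) \<Rightarrow> complex" where
  "Dz a b z = PP a z - PP b z"

lemma Dz_Lp: "a \<in> W \<Longrightarrow> b \<in> W \<Longrightarrow> Dz a b \<in> Lp r"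
  using Lp_diff[of "PP a" r "PP b"] PP_prop by (simp add: Dz_def[abs_def])

lemma Dz_eq: "a \<in> W \<Longrightarrow> b \<in> W \<Longrightarrow> x \<in> conf n \<Longrightarrow> Dz a b (F x) = (yv x a - yv x b) / (yv x c0 - yv x d0)"
proof -
  assume a: "a \<in> W" and b: "b \<in> W" and x: "x \<in> conf n"
  have "Dz a b (F x) = (yv x a - yv x c0) / (yv x c0 - yv x d0) - (yv x b - yv x c0) / (yv x c0 - yv x d0)"
    unfolding Dz_def using PP_prop[OF a] PP_prop[OF b] x by simp
  then show ?thesis by (simp add: diff_divide_distrib)
qed

lemma Dz_nz: "a \<in> W \<Longrightarrow> b \<in> W \<Longrightarrow> a \<noteq> b \<Longrightarrow> x \<in> conf n \<Longrightarrow> Dz a b (F x) \<noteq> 0"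
  using Dz_eq[of a b x] yv_inj[of x a b] D0_nz[of x] by simp

lemma Dz_DDf: "a \<in> W \<Longrightarrow> b \<in> W \<Longrightarrow> x \<in> conf n \<Longrightarrow>
   Dz a b (F x) = DDf (1 / (yv x c0 - yv x d0)) (x v) (x a) (x b)"
proof -
  assume a: "a \<in> W" and b: "b \<in> W" and x: "x \<in> conf n"
  have A: "x a - x v \<noteq> 0" "x b - x v \<noteq> 0" using xv_ne[OF x] a b by auto
  have h: "yv x a - yv x b = - (x a - x b) / ((x a - x v) * (x b - x v))"
    using A by (simp add: yv_def field_simps)
  have g: "(- q / P) / D = - (1 / D) * q / P" for q P D :: complex
    by (simp add: divide_inverse ac_simps)
  show ?thesis unfolding Dz_eq[OF a b x] DDf_def h by (rule g)
qed

end



lemma lmono_cong: "(\<And>j. j < r \<Longrightarrow> c j = c' j) \<Longrightarrow> lmono r c z = lmono r c' z"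
  unfolding lmono_def by (rule prod.cong) auto

lemma lmono_delta: "k < r \<Longrightarrow> lmono r (\<lambda>j. if j = k then 1 else 0) z = z k"
proof -
  assume k: "k < r"
  have "lmono r (\<lambda>j. if j = k then 1 else 0) z = (\<Prod>j<r. if j = k then z k else 1)"
    unfolding lmono_def by (rule prod.cong) auto
  also have "\<dots> = z k" using k by simp
  finally show ?thesis .
qed

lemma cr_poly:
  assumes A: "A \<in> Lp r" and B: "B \<in> Lp r" and tor: "\<forall>x\<in>X. Fm x \<in> torus r"
    and eq: "\<forall>x\<in>X. f x * B (Fm x) = A (Fm x) \<and> B (Fm x) \<noteq> 0"
  shows "\<forall>z\<in>Fm ` X. \<exists>p\<in>polyfun. \<exists>q\<in>polyfun. q z \<noteq> 0 \<and>
           (\<forall>x\<in>X. q (Fm x) \<noteq> 0 \<longrightarrow> f x * q (Fm x) = p (Fm x))"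
proof -
  obtain pA NA where pA: "pA \<in> polyfun" "\<forall>z\<in>torus r. A z * mP r z ^ NA = pA z" using A by (auto simp: Lp_def)
  obtain pB NB where pB: "pB \<in> polyfun" "\<forall>z\<in>torus r. B z * mP r z ^ NB = pB z" using B by (auto simp: Lp_def)
  define q where "q = (\<lambda>z. pB z * mP r z ^ NA)"
  define p where "p = (\<lambda>z. pA z * mP r z ^ NB)"
  have qp: "q \<in> polyfun" "p \<in> polyfun" unfolding q_def p_def
    by (intro polyfun_mult polyfun_power mP_polyfun pA(1) pB(1))+
  have main: "f x * q (Fm x) = p (Fm x)" "q (Fm x) \<noteq> 0" if x: "x \<in> X" for x
  proof -
    have t: "Fm x \<in> torus r" using tor x by blast
    have q1: "q (Fm x) = B (Fm x) * mP r (Fm x) ^ NB * mP r (Fm x) ^ NA" unfolding q_def using pB(2) t by simp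
    have p1: "p (Fm x) = A (Fm x) * mP r (Fm x) ^ NA * mP r (Fm x) ^ NB" unfolding p_def using pA(2) t by simp
    have e: "f x * B (Fm x) = A (Fm x)" "B (Fm x) \<noteq> 0" using eq x by auto
    show "f x * q (Fm x) = p (Fm x)" unfolding q1 p1 e(1)[symmetric] by (simp add: ac_simps)
    show "q (Fm x) \<noteq> 0" unfolding q1 using e(2) mP_nz[OF t] by simp
  qed
  show ?thesis
  proof
    fix z assume "z \<in> Fm ` X"
    then obtain x0 where x0: "x0 \<in> X" "z = Fm x0" by blast
    show "\<exists>p\<in>polyfun. \<exists>q\<in>polyfun. q z \<noteq> 0 \<and> (\<forall>x\<in>X. q (Fm x) \<noteq> 0 \<longrightarrow> f x * q (Fm x) = p (Fm x))"
      using qp main x0 by blast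
  qed
qed

context UVC begin

lemma mob_inj:
  assumes x: "x \<in> conf n" and x': "x' \<in> conf n" and eqF: "F x = F x'"
  shows "mob_equiv n x x'"
proof -
  define y where "y = yv x"
  define y' where "y' = yv x'"
  define D where "D = y c0 - y d0"
  define D' where "D' = y' c0 - y' d0"
  have D: "D \<noteq> 0" "D' \<noteq> 0" using D0_nz[OF x] D0_nz[OF x'] by (auto simp: D_def D'_def y_def y'_def)
  define l where "l = D' / D"
  define m where "m = y' c0 - l * y c0"
  have lnz: "l \<noteq> 0" using D by (simp add: l_def)
  have key: "y' a = l * y a + m" if a: "a \<in> W" for a
  proof -
    have "(y a - y c0) / D = (y' a - y' c0) / D'"
      using PP_prop[OF a] x x' eqF unfolding y_def y'_def D_def D'_def by metis
    then have "y' a - y' c0 = l * (y a - y c0)" using D unfolding l_def by (simp add: field_simps)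
    then show ?thesis unfolding m_def by (simp add: algebra_simps)
  qed
  show ?thesis unfolding mob_equiv_def
  proof (intro exI conjI)
    have "(m * x' v + 1) * (l - m * x v) - (l * x' v - m * x v * x' v - x v) * m = l"
      by (simp add: algebra_simps)
    then show "(m * x' v + 1) * (l - m * x v) - (l * x' v - m * x v * x' v - x v) * m \<noteq> 0" using lnz by simp
    show "\<forall>i<n. m * x i + (l - m * x v) \<noteq> 0 \<and>
       x' i = ((m * x' v + 1) * x i + (l * x' v - m * x v * x' v - x v)) / (m * x i + (l - m * x v))"
    proof (intro allI impI)
      fix i assume i: "i < n"
      show "m * x i + (l - m * x v) \<noteq> 0 \<and>
       x' i = ((m * x' v + 1) * x i + (l * x' v - m * x v * x' v - x v)) / (m * x i + (l - m * x v))"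
      proof (cases "i = v")
        case True
        have h: "(m * x' v + 1) * x v + (l * x' v - m * x v * x' v - x v) = l * x' v" by (simp add: algebra_simps)
        show ?thesis unfolding True h using lnz by simp
      next
        case False
        then have iW: "i \<in> W" using i by (simp add: W_iff)
        define A where "A = x i - x v"
        have A: "A \<noteq> 0" using xv_ne[OF x iW] by (simp add: A_def)
        have Y: "y' i \<noteq> 0" using yv_nz[OF x' iW] by (simp add: y'_def)
        have yi: "y i = 1 / A" by (simp add: y_def yv_def A_def)
        have e1: "m * x i + (l - m * x v) = A * y' i"
          using key[OF iW] A unfolding yi by (simp add: A_def field_simps)
        have e2: "(m * x' v + 1) * x i + (l * x' v - m * x v * x' v - x v) = x' v * (A * y' i) + A"
          unfolding e1[symmetric] by (simp add: A_def algebra_simps)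
        have xi': "x' i = x' v + 1 / y' i" using x_from_yv[OF x' iW] by (simp add: y'_def)
        show ?thesis unfolding e1 e2 xi' using A Y by (simp add: field_simps)
      qed
    qed
  qed
qed

lemma cr_Lp:
  assumes ijkl: "i < n" "j < n" "k < n" "l < n" "distinct [i, j, k, l]"
  shows "\<exists>A B. A \<in> Lp r \<and> B \<in> Lp r \<and> (\<forall>x\<in>conf n. cross_ratio i j k l x * B (F x) = A (F x) \<and> B (F x) \<noteq> 0)"
proof -
  have dx: "x \<in> conf n \<Longrightarrow> a < n \<Longrightarrow> b < n \<Longrightarrow> a \<noteq> b \<Longrightarrow> x a \<noteq> x b" for x a b
    by (auto simp: conf_def)
  have W': "a < n \<Longrightarrow> a \<noteq> v \<Longrightarrow> a \<in> W" for a by (simp add: W_iff)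
  show ?thesis
  proof (cases "v \<in> {i, j, k, l}")
    case False
    then have W: "i \<in> W" "j \<in> W" "k \<in> W" "l \<in> W" using ijkl W' by auto
    show ?thesis
    proof (intro exI conjI ballI)
      show "(\<lambda>z. Dz i k z * Dz j l z) \<in> Lp r" using W by (intro Lp_mult Dz_Lp)
      show "(\<lambda>z. Dz i l z * Dz j k z) \<in> Lp r" using W by (intro Lp_mult Dz_Lp)
      fix x assume x: "x \<in> conf n"
      show "cross_ratio i j k l x * (Dz i l (F x) * Dz j k (F x)) = Dz i k (F x) * Dz j l (F x)"
        unfolding cross_ratio_def Dz_DDf[OF W(1) W(4) x] Dz_DDf[OF W(2) W(3) x] Dz_DDf[OF W(1) W(3) x] Dz_DDf[OF W(2) W(4) x]
        by (rule c1) (use ijkl False x dx v_lt in auto)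
      show "Dz i l (F x) * Dz j k (F x) \<noteq> 0" using Dz_nz W x ijkl by auto
    qed
  next
    case True
    then consider "i = v" | "j = v" | "k = v" | "l = v" by auto
    then show ?thesis
    proof cases
      case 1
      then have W: "j \<in> W" "k \<in> W" "l \<in> W" using ijkl W' by auto
      show ?thesis
      proof (intro exI conjI ballI)
        show "Dz l j \<in> Lp r" "Dz k j \<in> Lp r" using W by (auto intro: Dz_Lp)
        fix x assume x: "x \<in> conf n"
        show "cross_ratio i j k l x * Dz k j (F x) = Dz l j (F x)"
          unfolding cross_ratio_def Dz_DDf[OF W(2) W(1) x] Dz_DDf[OF W(3) W(1) x] 1
          by (rule c3) (use ijkl 1 x dx v_lt in auto)
        show "Dz k j (F x) \<noteq> 0" using Dz_nz W x ijkl by auto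
      qed
    next
      case 2
      then have W: "i \<in> W" "k \<in> W" "l \<in> W" using ijkl W' by auto
      show ?thesis
      proof (intro exI conjI ballI)
        show "Dz k i \<in> Lp r" "Dz l i \<in> Lp r" using W by (auto intro: Dz_Lp)
        fix x assume x: "x \<in> conf n"
        show "cross_ratio i j k l x * Dz l i (F x) = Dz k i (F x)"
          unfolding cross_ratio_def Dz_DDf[OF W(3) W(1) x] Dz_DDf[OF W(2) W(1) x] 2
          by (rule c4) (use ijkl 2 x dx v_lt in auto)
        show "Dz l i (F x) \<noteq> 0" using Dz_nz W x ijkl by auto
      qed
    next
      case 3
      then have W: "i \<in> W" "j \<in> W" "l \<in> W" using ijkl W' by auto
      show ?thesis
      proof (intro exI conjI ballI)
        show "Dz l j \<in> Lp r" "Dz l i \<in> Lp r" using W by (auto intro: Dz_Lp)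
        fix x assume x: "x \<in> conf n"
        show "cross_ratio i j k l x * Dz l i (F x) = Dz l j (F x)"
          unfolding cross_ratio_def Dz_DDf[OF W(3) W(1) x] Dz_DDf[OF W(3) W(2) x] 3
          by (rule c5) (use ijkl 3 x dx v_lt in auto)
        show "Dz l i (F x) \<noteq> 0" using Dz_nz W x ijkl by auto
      qed
    next
      case 4
      then have W: "i \<in> W" "j \<in> W" "k \<in> W" using ijkl W' by auto
      show ?thesis
      proof (intro exI conjI ballI)
        show "Dz k i \<in> Lp r" "Dz k j \<in> Lp r" using W by (auto intro: Dz_Lp)
        fix x assume x: "x \<in> conf n"
        show "cross_ratio i j k l x * Dz k j (F x) = Dz k i (F x)"
          unfolding cross_ratio_def Dz_DDf[OF W(3) W(2) x] Dz_DDf[OF W(3) W(1) x] 4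
          by (rule c2) (use ijkl 4 x dx v_lt in auto)
        show "Dz k j (F x) \<noteq> 0" using Dz_nz W x ijkl by auto
      qed
    qed
  qed
qed

end



context UVC begin

lemma M_f0: "z \<in> torus r \<Longrightarrow> M (c0, d0) z = 1"
proof -
  have z0: "uef c0 d0 c0 d0 = (\<lambda>g. 0)" unfolding uef_def by (rule ext) simp
  have ce0: "ce (c0,d0) k = 0" if k: "k < r" for k
  proof -
    have "uef c0 d0 c0 d0 = (\<lambda>g. \<Sum>k<r. ce (c0,d0) k * u k g)" using ce_prop[OF f0] by simp
    then have "\<And>g. (\<Sum>k<r. ce (c0,d0) k * u k g) = 0" using z0 by metis
    then show ?thesis using indep k by blast
  qed
  have "lmono r (ce (c0,d0)) z = 1" unfolding lmono_def using ce0 by simp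
  moreover have "sig (c0,d0) = 1" unfolding sig_def
    using sgn_sq[of c0] sgn_sq[of d0] by (simp add: algebra_simps)
  ultimately show ?thesis by (simp add: M_def)
qed

lemma coeff_delta:
  assumes k: "k < r" and j: "j < r"
  shows "(\<Sum>e\<in>Gp. u k e * ce e j) = (if j = k then 1 else 0)"
proof -
  have "u k = (\<lambda>g. \<Sum>e\<in>Gp. u k e * uef (fst e) (snd e) c0 d0 g)" by (rule lat_expand[OF u_lat[OF k] f0])
  also have "\<dots> = (\<lambda>g. \<Sum>e\<in>Gp. u k e * (\<Sum>j<r. ce e j * u j g))"
  proof (rule ext, rule sum.cong[OF refl])
    fix g e assume e: "e \<in> Gp"
    show "u k e * uef (fst e) (snd e) c0 d0 g = u k e * (\<Sum>j<r. ce e j * u j g)"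
      using ce_prop[OF e] by metis
  qed
  also have "\<dots> = (\<lambda>g. \<Sum>j<r. (\<Sum>e\<in>Gp. u k e * ce e j) * u j g)"
    by (rule ext) (simp add: sum_distrib_left sum_distrib_right sum.swap[of _ Gp] mult.assoc)
  finally have A: "u k = (\<lambda>g. \<Sum>j<r. (\<Sum>e\<in>Gp. u k e * ce e j) * u j g)" .
  have B: "u k = (\<lambda>g. \<Sum>j<r. (if j = k then 1 else 0) * u j g)"
  proof (rule ext)
    fix g
    have "(\<Sum>j<r. (if j = k then 1 else 0) * u j g) = (\<Sum>j<r. if j = k then u k g else 0)"
      by (rule sum.cong) auto
    also have "\<dots> = u k g" using k by simp
    finally show "u k g = (\<Sum>j<r. (if j = k then 1 else 0) * u j g)" by simp
  qed
  have C: "(\<lambda>g. \<Sum>j<r. (\<Sum>e\<in>Gp. u k e * ce e j) * u j g) = (\<lambda>g. \<Sum>j<r. (if j = k then 1 else 0) * u j g)"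
    using trans[OF A[symmetric] B] .
  show ?thesis using coeff_unique[OF C j] by simp
qed

definition Eq :: "nat \<times> nat \<Rightarrow> (nat \<Rightarrow> complex) \<Rightarrow> complex" where
  "Eq e z = Dz (fst e) (snd e) z - M e z"

definition hz :: "(nat \<Rightarrow> complex) \<Rightarrow> complex" where
  "hz z = (\<Prod>a\<in>W. \<Prod>b\<in>W - {a}. Dz a b z)"

lemma finW: "finite W" by (simp add: W_def)

lemma Eq_Lp: "e \<in> Gp \<Longrightarrow> Eq e \<in> Lp r"
  using Gp_W[of e] Lp_diff[OF Dz_Lp M_Lp] by (simp add: Eq_def[abs_def])

lemma hz_Lp: "hz \<in> Lp r"
proof -
  have "(\<lambda>z. \<Prod>a\<in>W. \<Prod>b\<in>W - {a}. Dz a b z) \<in> Lp r"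
    by (rule Lp_prod[OF finW], rule Lp_prod) (auto simp: finW intro: Dz_Lp)
  then show ?thesis by (simp add: hz_def[abs_def])
qed

lemma hz_nz_iff: "hz z \<noteq> 0 \<longleftrightarrow> (\<forall>a\<in>W. \<forall>b\<in>W. a \<noteq> b \<longrightarrow> Dz a b z \<noteq> 0)"
  unfolding hz_def using finW by (auto simp: prod_zero_iff)

lemma image_char:
  "F ` conf n = {z \<in> torus r. (\<forall>e\<in>Gp. Eq e z = 0) \<and> hz z \<noteq> 0}"
proof
  show "F ` conf n \<subseteq> {z \<in> torus r. (\<forall>e\<in>Gp. Eq e z = 0) \<and> hz z \<noteq> 0}"
  proof
    fix z assume "z \<in> F ` conf n"
    then obtain x where x: "x \<in> conf n" "z = F x" by blast
    have "z \<in> torus r" using Phi_torus[OF x(1)] x(2) by simp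
    moreover have "\<forall>e\<in>Gp. Eq e z = 0"
    proof
      fix e assume e: "e \<in> Gp"
      show "Eq e z = 0" unfolding Eq_def x(2) Dz_eq[OF conjunct1[OF Gp_W[OF e]] conjunct1[OF conjunct2[OF Gp_W[OF e]]] x(1)]
        M_eq[OF e x(1), symmetric] by simp
    qed
    moreover have "hz z \<noteq> 0" unfolding hz_nz_iff x(2) using Dz_nz x(1) by blast
    ultimately show "z \<in> {z \<in> torus r. (\<forall>e\<in>Gp. Eq e z = 0) \<and> hz z \<noteq> 0}" by blast
  qed
next
  show "{z \<in> torus r. (\<forall>e\<in>Gp. Eq e z = 0) \<and> hz z \<noteq> 0} \<subseteq> F ` conf n"
  proof
    fix z assume "z \<in> {z \<in> torus r. (\<forall>e\<in>Gp. Eq e z = 0) \<and> hz z \<noteq> 0}"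
    then have z: "z \<in> torus r" "\<forall>e\<in>Gp. Eq e z = 0" "hz z \<noteq> 0" by auto
    have Dnz: "a \<in> W \<Longrightarrow> b \<in> W \<Longrightarrow> a \<noteq> b \<Longrightarrow> Dz a b z \<noteq> 0" for a b using z(3) hz_nz_iff by blast
    have DM: "e \<in> Gp \<Longrightarrow> Dz (fst e) (snd e) z = M e z" for e using z(2) by (auto simp: Eq_def)
    have D0: "Dz c0 d0 z = 1" using DM[OF f0] M_f0[OF z(1)] by simp
    have "finite ((\<lambda>a. PP a z) ` W)" using finW by simp
    then obtain t :: complex where t: "t \<notin> (\<lambda>a. PP a z) ` W"
      using ex_new_if_finite[OF infinite_UNIV_char_0] by blast
    have tne: "a \<in> W \<Longrightarrow> PP a z - t \<noteq> 0" for a using t by force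
    define x where "x = (\<lambda>i. if i \<in> W then 1 / (PP i z - t) else 0)"
    have vW: "v \<notin> W" by (simp add: W_def)
    have x_conf: "x \<in> conf n"
      unfolding conf_def
    proof (intro CollectI conjI allI impI)
      fix i j assume ij: "i < n" "j < n" "i \<noteq> j"
      show "x i \<noteq> x j"
      proof (cases "i \<in> W")
        case iW: True
        show ?thesis
        proof (cases "j \<in> W")
          case jW: True
          have "PP i z \<noteq> PP j z" using Dnz[OF iW jW ij(3)] by (simp add: Dz_def)
          then show ?thesis using iW jW tne[OF iW] tne[OF jW] by (simp add: x_def field_simps)
        next
          case False
          then show ?thesis using iW tne[OF iW] by (simp add: x_def)
        qed
      next
        case False
        then have jW: "j \<in> W" using ij by (auto simp: W_iff)
        then show ?thesis using False tne[OF jW] by (simp add: x_def)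
      qed
    next
      fix i assume "n \<le> i"
      then show "x i = 0" by (simp add: x_def W_iff)
    qed
    have yx: "a \<in> W \<Longrightarrow> yv x a = PP a z - t" for a
      using vW tne[of a] by (simp add: yv_def x_def)
    have ue: "utilde G (uef (fst e) (snd e) c0 d0) x = lmono r (ce e) z" if e: "e \<in> Gp" for e
    proof -
      have e': "(fst e, snd e) \<in> Gp" using e by simp
      have W2: "fst e \<in> W" "snd e \<in> W" using Gp_W[OF e] by auto
      have "utilde G (uef (fst e) (snd e) c0 d0) x = sig e * ((yv x (fst e) - yv x (snd e)) / (yv x c0 - yv x d0))"
        unfolding sig_def by (rule utilde_uef[OF e' f0 x_conf])
      also have "(yv x (fst e) - yv x (snd e)) / (yv x c0 - yv x d0) = Dz (fst e) (snd e) z"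
        using D0 unfolding yx[OF W2(1)] yx[OF W2(2)] yx[OF f0W(1)] yx[OF f0W(2)] Dz_def by simp
      also have "\<dots> = M e z" by (rule DM[OF e])
      finally show ?thesis unfolding M_def by (simp add: mult.assoc[symmetric] sig_sq)
    qed
    have "F x = z"
    proof
      fix k
      show "F x k = z k"
      proof (cases "k < r")
        case k: True
        have "F x k = utilde G (u k) x" using k by (simp add: Phi_def)
        also have "\<dots> = utilde G (\<lambda>g. \<Sum>e\<in>Gp. u k e * uef (fst e) (snd e) c0 d0 g) x"
          using lat_expand[OF u_lat[OF k] f0] by simp
        also have "\<dots> = (\<Prod>e\<in>Gp. utilde G (uef (fst e) (snd e) c0 d0) x powi u k e)"
          by (rule utilde_lin[OF finG conf_nzc[OF x_conf] finGp])
        also have "\<dots> = (\<Prod>e\<in>Gp. (lmono r (ce e) z) powi u k e)"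
          by (rule prod.cong[OF refl]) (simp add: ue)
        also have "\<dots> = lmono r (\<lambda>j. \<Sum>e\<in>Gp. u k e * ce e j) z"
          by (rule lmono_lin[OF finGp z(1)])
        also have "\<dots> = lmono r (\<lambda>j. if j = k then 1 else 0) z"
          by (rule lmono_cong) (simp add: coeff_delta[OF k])
        also have "\<dots> = z k" by (rule lmono_delta[OF k])
        finally show ?thesis .
      next
        case False
        then show ?thesis using z(1) by (simp add: Phi_def torus_def)
      qed
    qed
    then show "z \<in> F ` conf n" using x_conf by blast
  qed
qed

lemma lc: "locally_closed_in_torus r (F ` conf n)"
proof -
  have "\<forall>e\<in>Gp. \<exists>p. p \<in> polyfun \<and> (\<forall>z\<in>torus r. Eq e z = 0 \<longleftrightarrow> p z = 0)"
  proof
    fix e assume e: "e \<in> Gp"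
    obtain p where "p \<in> polyfun" "\<And>z. z \<in> torus r \<Longrightarrow> Eq e z = 0 \<longleftrightarrow> p z = 0"
      using Lp_zero_iff[OF Eq_Lp[OF e]] by blast
    then show "\<exists>p. p \<in> polyfun \<and> (\<forall>z\<in>torus r. Eq e z = 0 \<longleftrightarrow> p z = 0)" by blast
  qed
  then obtain pe where pe: "\<forall>e\<in>Gp. pe e \<in> polyfun \<and> (\<forall>z\<in>torus r. Eq e z = 0 \<longleftrightarrow> pe e z = 0)"
    by metis
  obtain ph where ph: "ph \<in> polyfun" "\<And>z. z \<in> torus r \<Longrightarrow> hz z = 0 \<longleftrightarrow> ph z = 0"
    using Lp_zero_iff[OF hz_Lp] by blast
  have "F ` conf n = {z \<in> torus r. (\<forall>f\<in>pe ` Gp. f z = 0) \<and> (\<exists>h\<in>{ph}. h z \<noteq> 0)}"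
    unfolding image_char using pe ph(2) by auto
  moreover have "pe ` Gp \<subseteq> polyfun" "{ph} \<subseteq> polyfun" "finite {ph}" using pe ph(1) by auto
  ultimately show ?thesis unfolding locally_closed_in_torus_def by blast
qed

lemma embedding: "embedding_M0n n r F"
  unfolding embedding_M0n_def
proof (intro conjI allI impI)
  show "\<forall>x\<in>conf n. \<forall>y\<in>conf n. F x = F y \<longrightarrow> mob_equiv n x y" using mob_inj by blast
  show "locally_closed_in_torus r (F ` conf n)" by (rule lc)
  fix i j k l assume ijkl: "i < n" "j < n" "k < n" "l < n" "distinct [i, j, k, l]"
  obtain A B where AB: "A \<in> Lp r" "B \<in> Lp r" "\<forall>x\<in>conf n. cross_ratio i j k l x * B (F x) = A (F x) \<and> B (F x) \<noteq> 0"
    using cr_Lp[OF ijkl] by blast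
  show "\<forall>z\<in>F ` conf n. \<exists>p\<in>polyfun. \<exists>q\<in>polyfun. q z \<noteq> 0 \<and>
           (\<forall>x\<in>conf n. q (F x) \<noteq> 0 \<longrightarrow> cross_ratio i j k l x * q (F x) = p (F x))"
    by (rule cr_poly[OF AB(1,2) _ AB(3)]) (use Phi_torus in blast)
qed

end



lemma polyfun_isCont: "p \<in> polyfun \<Longrightarrow> isCont (\<lambda>t::complex. p (\<lambda>e. t * s e)) t0"
  by (induction p rule: polyfun.induct) (auto intro!: continuous_intros)

lemma mob_refl: "mob_equiv n x x"
  unfolding mob_equiv_def by (rule exI[of _ 1], rule exI[of _ 0], rule exI[of _ 0], rule exI[of _ 1]) simp

lemma cr_mob_aux:
  fixes d dik djl dil djk Pi Pj Pk Pl :: complex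
  assumes "d \<noteq> 0" "Pi \<noteq> 0" "Pj \<noteq> 0" "Pk \<noteq> 0" "Pl \<noteq> 0" "dil \<noteq> 0" "djk \<noteq> 0"
  shows "((d * dik / (Pi * Pk)) * (d * djl / (Pj * Pl))) / ((d * dil / (Pi * Pl)) * (d * djk / (Pj * Pk)))
       = (dik * djl) / (dil * djk)"
  using assms by (simp add: field_simps)

lemma mob_cr:
  assumes m: "mob_equiv n x x'" and x: "x \<in> conf n"
    and ijkl: "i < n" "j < n" "k < n" "l < n" "distinct [i, j, k, l]"
  shows "cross_ratio i j k l x' = cross_ratio i j k l x"
proof -
  obtain a b c d where abcd: "a * d - b * c \<noteq> 0" "\<forall>i<n. c * x i + d \<noteq> 0 \<and> x' i = (a * x i + b) / (c * x i + d)"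
    using m unfolding mob_equiv_def by blast
  have diff: "x' p - x' q = (a * d - b * c) * (x p - x q) / ((c * x p + d) * (c * x q + d))" if "p < n" "q < n" for p q
  proof -
    have "c * x p + d \<noteq> 0" "c * x q + d \<noteq> 0" using abcd that by auto
    then show ?thesis using abcd that by (simp add: field_simps)
  qed
  have dx: "x p - x q \<noteq> 0" if "p < n" "q < n" "p \<noteq> q" for p q using x that by (auto simp: conf_def)
  show ?thesis unfolding cross_ratio_def
    using diff[of i k] diff[of j l] diff[of i l] diff[of j k] ijkl
      cr_mob_aux[OF abcd(1), of "c * x i + d" "c * x j + d" "c * x k + d" "c * x l + d" "x i - x l" "x j - x k" "x i - x k" "x j - x l"]
      abcd(2) dx[of i l] dx[of j k]
    by auto
qed

context UV begin

lemma finW': "finite W" by (simp add: W_def)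

lemma nbrs_sym: "i < n \<Longrightarrow> j < n \<Longrightarrow> j \<in> nbrs n G i \<longleftrightarrow> i \<in> nbrs n G j"
  by (auto simp: nbrs_def edge_def min.commute max.commute)

lemma antisym:
  assumes z: "z \<in> conf n"
  shows "(\<Sum>i<n. \<Sum>j\<in>nbrs n G i. s (edge i j) / (z i - z j)) = 0"
proof -
  define f where "f i j = s (edge i j) / (z i - z j)" for i j
  have fs: "f i j = - f j i" for i j unfolding f_def by (simp add: edge_def min.commute max.commute minus_divide_right)
  have nb: "nbrs n G i = {j. j \<in> {..<n} \<and> j \<in> nbrs n G i}" for i by (auto simp: nbrs_def)
  have "(\<Sum>i<n. \<Sum>j\<in>nbrs n G i. f i j) = (\<Sum>i<n. \<Sum>j\<in>{j. j \<in> {..<n} \<and> j \<in> nbrs n G i}. f i j)"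
    by (subst nb) simp
  also have "\<dots> = (\<Sum>j<n. \<Sum>i\<in>{i. i \<in> {..<n} \<and> j \<in> nbrs n G i}. f i j)"
    by (rule sum.swap_restrict) auto
  also have "\<dots> = (\<Sum>j<n. \<Sum>i\<in>nbrs n G j. f i j)"
  proof (rule sum.cong[OF refl])
    fix j assume "j \<in> {..<n}"
    then have "{i. i \<in> {..<n} \<and> j \<in> nbrs n G i} = nbrs n G j" using nbrs_sym by (auto simp: nbrs_def)
    then show "(\<Sum>i\<in>{i. i \<in> {..<n} \<and> j \<in> nbrs n G i}. f i j) = (\<Sum>i\<in>nbrs n G j. f i j)" by simp
  qed
  also have "\<dots> = (\<Sum>j<n. \<Sum>i\<in>nbrs n G j. - f j i)"
    by (intro sum.cong refl) (rule fs)
  also have "\<dots> = - (\<Sum>j<n. \<Sum>i\<in>nbrs n G j. f j i)" by (simp add: sum_negf)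
  finally show ?thesis unfolding f_def by simp
qed

lemma term_aux:
  fixes X0 Y1 Y2 s :: complex
  assumes "Y1 \<noteq> 0" "Y2 \<noteq> 0" "Y1 \<noteq> Y2"
  shows "s / ((X0 + 1 / Y1) - (X0 + 1 / Y2)) - s * Y1 = - (Y1 ^ 2) * (s / (Y1 - Y2))"
proof -
  have "(X0 + 1 / Y1) - (X0 + 1 / Y2) = (Y2 - Y1) / (Y1 * Y2)" using assms by (simp add: field_simps)
  moreover have "Y2 - Y1 \<noteq> 0" "Y1 - Y2 \<noteq> 0" using assms by auto
  ultimately show ?thesis using assms by (simp add: field_simps power2_eq_square)
qed

lemma v_nbrs: "a \<in> W \<Longrightarrow> v \<in> nbrs n G a"
  using edge_av[of a] v_lt by (auto simp: nbrs_def W_iff)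

lemma nbrs_W: "a \<in> W \<Longrightarrow> j \<in> nbrs n G a - {v} \<Longrightarrow> j \<in> W \<and> j \<noteq> a"
  by (auto simp: nbrs_def W_iff)

lemma E_transform:
  assumes z: "z \<in> conf n" and s: "s \<in> kin_space n G" and a: "a \<in> W"
  shows "(\<Sum>j\<in>nbrs n G a. s (edge a j) / (z a - z j)) =
         - (yv z a ^ 2) * (\<Sum>j\<in>nbrs n G a - {v}. s (edge a j) / (yv z a - yv z j))"
proof -
  have an: "a < n" using a by (simp add: W_iff)
  have row: "(\<Sum>j\<in>nbrs n G a. s (edge a j)) = 0" using s an by (simp add: kin_space_def)
  have sp: "(\<Sum>j\<in>nbrs n G a. g j) = g v + (\<Sum>j\<in>nbrs n G a - {v}. g j)" for g :: "nat \<Rightarrow> complex"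
    using v_nbrs[OF a] nbrs_finite by (simp add: sum.remove)
  have sv: "s (edge a v) = - (\<Sum>j\<in>nbrs n G a - {v}. s (edge a j))" using row sp[of "\<lambda>j. s (edge a j)"] by (simp add: eq_neg_iff_add_eq_0)
  have "(\<Sum>j\<in>nbrs n G a. s (edge a j) / (z a - z j)) =
        s (edge a v) * yv z a + (\<Sum>j\<in>nbrs n G a - {v}. s (edge a j) / (z a - z j))"
    unfolding sp by (simp add: yv_def)
  also have "\<dots> = (\<Sum>j\<in>nbrs n G a - {v}. s (edge a j) / (z a - z j) - s (edge a j) * yv z a)"
    unfolding sv by (simp add: sum_subtractf sum_distrib_right)
  also have "\<dots> = (\<Sum>j\<in>nbrs n G a - {v}. - (yv z a ^ 2) * (s (edge a j) / (yv z a - yv z j)))"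
  proof (rule sum.cong[OF refl])
    fix j assume j: "j \<in> nbrs n G a - {v}"
    have jW: "j \<in> W" "j \<noteq> a" using nbrs_W[OF a j] by auto
    have "s (edge a j) / (z a - z j) - s (edge a j) * yv z a =
      s (edge a j) / ((z v + 1 / yv z a) - (z v + 1 / yv z j)) - s (edge a j) * yv z a"
      using x_from_yv[OF z a] x_from_yv[OF z jW(1)] by simp
    also have "\<dots> = - (yv z a ^ 2) * (s (edge a j) / (yv z a - yv z j))"
      by (rule term_aux) (use yv_nz[OF z a] yv_nz[OF z jW(1)] yv_inj[OF z a jW(1)] jW in auto)
    finally show "s (edge a j) / (z a - z j) - s (edge a j) * yv z a = - (yv z a ^ 2) * (s (edge a j) / (yv z a - yv z j))" .
  qed
  also have "\<dots> = - (yv z a ^ 2) * (\<Sum>j\<in>nbrs n G a - {v}. s (edge a j) / (yv z a - yv z j))"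
    by (simp add: sum_distrib_left)
  finally show ?thesis .
qed

lemma cr_v:
  assumes x: "x \<in> conf n" and W: "i \<in> W" "j \<in> W" "k \<in> W" and d: "i \<noteq> j" "i \<noteq> k" "j \<noteq> k"
  shows "cross_ratio i j k v x = (yv x k - yv x i) / (yv x k - yv x j)"
proof -
  have DD1: "DDf 1 (x v) (x a) (x b) = yv x a - yv x b" if "a \<in> W" "b \<in> W" for a b
  proof -
    have A: "x a - x v \<noteq> 0" "x b - x v \<noteq> 0" using xv_ne[OF x] that by auto
    then show ?thesis unfolding DDf_def yv_def by (simp add: field_simps)
  qed
  have dx: "p < n \<Longrightarrow> q < n \<Longrightarrow> p \<noteq> q \<Longrightarrow> x p \<noteq> x q" for p q using x by (auto simp: conf_def)
  have "cross_ratio i j k v x * DDf 1 (x v) (x k) (x j) = DDf 1 (x v) (x k) (x i)"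
    unfolding cross_ratio_def by (rule c2) (use W d dx v_lt in \<open>auto simp: W_iff\<close>)
  then have "cross_ratio i j k v x * (yv x k - yv x j) = yv x k - yv x i" using DD1 W by simp
  moreover have "yv x k - yv x j \<noteq> 0" using yv_inj[OF x W(3) W(2)] d by auto
  ultimately show ?thesis by (simp add: field_simps)
qed

lemma deform:
  assumes x: "x \<in> conf n" and s: "s \<in> kin_space n G" and se: "scat_eqs n G s x"
    and cl: "\<forall>e\<in>Gp. fst e \<in> K \<longleftrightarrow> snd e \<in> K"
    and T: "\<forall>b\<in>W. b \<in> K \<longrightarrow> yv x b + t \<noteq> 0 \<and> (\<forall>b'\<in>W. b' \<notin> K \<longrightarrow> yv x b + t \<noteq> yv x b')"
  defines "Yt \<equiv> \<lambda>i. yv x i + (if i \<in> K then t else 0)"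
  defines "xt \<equiv> \<lambda>i. if i \<in> W then x v + 1 / Yt i else x i"
  shows "xt \<in> conf n" "scat_eqs n G s xt" "\<forall>i\<in>W. yv xt i = Yt i"
proof -
  have vW: "v \<notin> W" by (simp add: W_def)
  have Ynz: "i \<in> W \<Longrightarrow> Yt i \<noteq> 0" for i using T yv_nz[OF x] by (auto simp: Yt_def)
  have Yinj: "i \<in> W \<Longrightarrow> j \<in> W \<Longrightarrow> i \<noteq> j \<Longrightarrow> Yt i \<noteq> Yt j" for i j
    using T yv_inj[OF x] by (auto simp: Yt_def) (metis+)
  have xtv: "xt v = x v" using vW by (simp add: xt_def)
  show xc: "xt \<in> conf n"
    unfolding conf_def
  proof (intro CollectI conjI allI impI)
    fix i j assume ij: "i < n" "j < n" "i \<noteq> j"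
    show "xt i \<noteq> xt j"
    proof (cases "i \<in> W")
      case iW: True
      show ?thesis
      proof (cases "j \<in> W")
        case jW: True
        then show ?thesis using iW Yinj[OF iW jW ij(3)] Ynz[OF iW] Ynz[OF jW] by (simp add: xt_def field_simps)
      next
        case False
        then have "j = v" using ij by (simp add: W_iff)
        then show ?thesis using iW Ynz[OF iW] by (simp add: xt_def vW)
      qed
    next
      case False
      then have iv: "i = v" using ij by (simp add: W_iff)
      then have jW: "j \<in> W" using ij by (simp add: W_iff)
      then show ?thesis using iv Ynz[OF jW] by (simp add: xt_def vW)
    qed
  next
    fix i assume "n \<le> i"
    then show "xt i = 0" using x by (simp add: xt_def W_iff conf_def)
  qed
  show yt: "\<forall>i\<in>W. yv xt i = Yt i"
    using Ynz by (simp add: yv_def xt_def vW)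
  have Ei: "(\<Sum>j\<in>nbrs n G a. s (edge a j) / (xt a - xt j)) = 0" if a: "a \<in> W" for a
  proof -
    have "(\<Sum>j\<in>nbrs n G a - {v}. s (edge a j) / (yv xt a - yv xt j)) =
          (\<Sum>j\<in>nbrs n G a - {v}. s (edge a j) / (yv x a - yv x j))"
    proof (rule sum.cong[OF refl])
      fix j assume j: "j \<in> nbrs n G a - {v}"
      have jW: "j \<in> W" using nbrs_W[OF a j] by auto
      have eG: "edge a j \<in> Gp" using j a by (auto simp: nbrs_def Gp_def edge_def min_def max_def W_iff)
      have "fst (edge a j) \<in> K \<longleftrightarrow> snd (edge a j) \<in> K" using cl eG by blast
      then have "a \<in> K \<longleftrightarrow> j \<in> K" by (auto simp: edge_def min_def max_def split: if_splits)
      then show "s (edge a j) / (yv xt a - yv xt j) = s (edge a j) / (yv x a - yv x j)"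
        using yt a jW by (auto simp: Yt_def)
    qed
    moreover have "(\<Sum>j\<in>nbrs n G a - {v}. s (edge a j) / (yv x a - yv x j)) = 0"
    proof -
      have "(\<Sum>j\<in>nbrs n G a. s (edge a j) / (x a - x j)) = 0" using se a by (simp add: scat_eqs_def W_iff)
      then show ?thesis using E_transform[OF x s a] yv_nz[OF x a] by simp
    qed
    ultimately show ?thesis using E_transform[OF xc s a] by simp
  qed
  show "scat_eqs n G s xt"
    unfolding scat_eqs_def
  proof (intro allI impI)
    fix i assume i: "i < n"
    show "(\<Sum>j\<in>nbrs n G i. s (edge i j) / (xt i - xt j)) = 0"
    proof (cases "i \<in> W")
      case True then show ?thesis by (rule Ei)
    next
      case False
      then have iv: "i = v" using i by (simp add: W_iff)
      have U: "{..<n} = insert v W" using v_lt by (auto simp: W_def)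
      have "0 = (\<Sum>i<n. \<Sum>j\<in>nbrs n G i. s (edge i j) / (xt i - xt j))" using antisym[OF xc] by simp
      also have "\<dots> = (\<Sum>j\<in>nbrs n G v. s (edge v j) / (xt v - xt j)) + (\<Sum>a\<in>W. \<Sum>j\<in>nbrs n G a. s (edge a j) / (xt a - xt j))"
        unfolding U using vW finW' by (simp add: sum.insert)
      also have "(\<Sum>a\<in>W. \<Sum>j\<in>nbrs n G a. s (edge a j) / (xt a - xt j)) = 0" using Ei by simp
      finally show ?thesis using iv by simp
    qed
  qed
qed

end



lemma t_aux1:
  fixes al be t t' :: complex
  assumes "al \<noteq> be" "be - t \<noteq> 0" "be - t' \<noteq> 0" "(al - t) / (be - t) = (al - t') / (be - t')"
  shows "t = t'"
proof -
  have "(al - t) * (be - t') = (al - t') * (be - t)" using assms(2-4) by (simp add: field_simps)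
  then have "(al - be) * (t - t') = 0" by (simp add: algebra_simps)
  then show ?thesis using assms(1) by simp
qed

lemma t_aux2:
  fixes al be t t' :: complex
  assumes "be \<noteq> 0" "(al - t) / be = (al - t') / be"
  shows "t = t'"
  using assms by (simp add: field_simps)

lemma polyfun_isCont': "p \<in> polyfun \<Longrightarrow> isCont (\<lambda>t::complex. p (\<lambda>e. t * s e)) a"
  by (rule polyfun_isCont)

context UV begin

lemma card_W: "card W = n - 1"
  using v_lt by (simp add: W_def)

lemma conn_f0: assumes "conn" shows "\<exists>e. e \<in> Gp"
proof (rule ccontr)
  assume "\<not> (\<exists>e. e \<in> Gp)"
  then have Gp0: "Gp = {}" by blast
  have "W \<noteq> {}" using card_W n4 by auto
  then obtain c where c: "c \<in> W" by blast
  have "(\<forall>e\<in>Gp. fst e \<in> {c} \<longleftrightarrow> snd e \<in> {c}) \<longrightarrow> W \<subseteq> {c} \<or> W \<inter> {c} = {}"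
    using assms unfolding conn_def by (rule spec)
  then have "W \<subseteq> {c} \<or> W \<inter> {c} = {}" using Gp0 by simp
  then have "W \<subseteq> {c}" using c by blast
  then have "card W \<le> 1" using card_mono[of "{c}" W] by simp
  then show False using card_W n4 by simp
qed

lemma conf_ne: "(\<lambda>i. if i < n then of_nat i else 0) \<in> conf n"
  by (simp add: conf_def)

lemma kin_smult: "s \<in> kin_space n G \<Longrightarrow> (\<lambda>e. t * s e) \<in> kin_space n G"
  by (simp add: kin_space_def sum_distrib_left[symmetric])

lemma copious_conn:
  assumes cop: "copious n G"
  shows "conn"
proof (rule ccontr)
  assume "\<not> conn"
  then obtain K where cl: "\<forall>e\<in>Gp. fst e \<in> K \<longleftrightarrow> snd e \<in> K" and K1: "\<not> W \<subseteq> K" and K2: "W \<inter> K \<noteq> {}"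
    unfolding conn_def by blast
  obtain a where a: "a \<in> W" "a \<in> K" using K2 by blast
  obtain c where c: "c \<in> W" "c \<notin> K" using K1 by blast
  have ac: "a \<noteq> c" using a c by blast
  have "card (W - {a, c}) > 0"
  proof -
    have "card (W - {a,c}) = card W - card {a,c}" using a c by (intro card_Diff_subset) (auto simp: finW')
    then show ?thesis using card_W n4 ac by simp
  qed
  then obtain w where w: "w \<in> W" "w \<noteq> a" "w \<noteq> c" by (metis Diff_iff card_gt_0_iff ex_in_conv insertCI)
  have dense: "zariski_dense_in (scat_image n G) (conf n)" and
    gen: "generic_on (kin_space n G) (\<lambda>s. scat_fiber n G s \<noteq> {} \<and> finite (mob_class n ` scat_fiber n G s))"
    using cop by (auto simp: copious_def)
  have "\<exists>s0\<in>kin_space n G. \<exists>e. s0 e \<noteq> 0"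
  proof (rule ccontr)
    assume "\<not> ?thesis"
    then have emp: "scat_image n G = {}" by (auto simp: scat_image_def)
    have d: "\<And>q y. q \<in> polyfun \<Longrightarrow> (\<forall>x\<in>scat_image n G. q x = 0) \<Longrightarrow> y \<in> conf n \<Longrightarrow> q y = 0"
      using dense unfolding zariski_dense_in_def by blast
    have "(\<lambda>_::nat\<Rightarrow>complex. 1::complex) (\<lambda>i. if i < n then of_nat i else 0) = 0"
      by (rule d[OF polyfun_const]) (use emp conf_ne in auto)
    then show False by simp
  qed
  then obtain s0 e0 where s0: "s0 \<in> kin_space n G" "s0 e0 \<noteq> 0" by blast
  obtain p s1 where p: "p \<in> polyfun" "s1 \<in> kin_space n G" "p s1 \<noteq> 0"
    and H: "\<forall>s\<in>kin_space n G. (\<exists>v. s v \<noteq> 0) \<longrightarrow> p s \<noteq> 0 \<longrightarrow>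
        scat_fiber n G s \<noteq> {} \<and> finite (mob_class n ` scat_fiber n G s)"
    using gen unfolding generic_on_def by blast
  have "\<exists>s\<in>kin_space n G. (\<exists>v. s v \<noteq> 0) \<and> p s \<noteq> 0"
  proof (cases "\<exists>v. s1 v \<noteq> 0")
    case True then show ?thesis using p by blast
  next
    case False
    then have s10: "(\<lambda>e. 0 * s0 e) = s1" by auto
    have "((\<lambda>t. p (\<lambda>e. t * s0 e)) \<longlongrightarrow> p (\<lambda>e. 0 * s0 e)) (at 0)"
      using polyfun_isCont'[OF p(1), where s = s0 and a = 0] by (simp add: isCont_def)
    then have ev1: "eventually (\<lambda>t. p (\<lambda>e. t * s0 e) \<noteq> 0) (at (0::complex))"
      using p(3) s10 by (intro tendsto_imp_eventually_ne) auto
    have ev2: "eventually (\<lambda>t. t \<noteq> (0::complex)) (at 0)" unfolding eventually_at_filter by simp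
    obtain t :: complex where t: "p (\<lambda>e. t * s0 e) \<noteq> 0" "t \<noteq> 0"
      using eventually_happens'[OF at_neq_bot eventually_conj[OF ev1 ev2]] by blast
    have ne: "(\<lambda>e. t * s0 e) e0 \<noteq> 0" using t s0 by simp
    have m: "(\<lambda>e. t * s0 e) \<in> kin_space n G" by (rule kin_smult[OF s0(1)])
    have "(\<exists>v. (\<lambda>e. t * s0 e) v \<noteq> 0) \<and> p (\<lambda>e. t * s0 e) \<noteq> 0" using ne t(1) by blast
    then show ?thesis by (rule bexI[OF _ m])
  qed
  then obtain s where s: "s \<in> kin_space n G" "\<exists>v. s v \<noteq> 0" "p s \<noteq> 0" by blast
  have fib: "scat_fiber n G s \<noteq> {}" "finite (mob_class n ` scat_fiber n G s)" using H s by blast+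
  then obtain x0 where "x0 \<in> scat_fiber n G s" by blast
  then have x: "x0 \<in> conf n" "scat_eqs n G s x0" by (simp_all add: scat_fiber_def)
  define x where "x = x0"
  have x: "x \<in> conf n" "scat_eqs n G s x" using x by (simp_all add: x_def)
  define T where "T = {t. \<forall>b\<in>W. b \<in> K \<longrightarrow> yv x b + t \<noteq> 0 \<and> (\<forall>b'\<in>W. b' \<notin> K \<longrightarrow> yv x b + t \<noteq> yv x b')}"
  define Bad where "Bad = (\<lambda>b. - yv x b) ` W \<union> (\<lambda>(b, b'). yv x b' - yv x b) ` (W \<times> W)"
  have "finite Bad" unfolding Bad_def using finW' by auto
  moreover have "UNIV - Bad \<subseteq> T"
  proof
    fix t assume t: "t \<in> UNIV - Bad"
    show "t \<in> T" unfolding T_def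
    proof (intro CollectI ballI impI conjI)
      fix b assume b: "b \<in> W" "b \<in> K"
      show "yv x b + t \<noteq> 0"
      proof
        assume "yv x b + t = 0"
        then have "t = - yv x b" by (simp add: eq_neg_iff_add_eq_0 add.commute)
        then show False using t b unfolding Bad_def by blast
      qed
      fix b' assume b': "b' \<in> W" "b' \<notin> K"
      show "yv x b + t \<noteq> yv x b'"
      proof
        assume "yv x b + t = yv x b'"
        then have "t = (\<lambda>(b, b'). yv x b' - yv x b) (b, b')" by (simp add: algebra_simps)
        then show False using t b b' unfolding Bad_def by blast
      qed
    qed
  qed
  ultimately have infT: "infinite T"
    using Diff_infinite_finite[OF _ infinite_UNIV_char_0] finite_subset by blast
  define xt where "xt t = (\<lambda>i. if i \<in> W then x v + 1 / (yv x i + (if i \<in> K then t else 0)) else x i)" for t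
  have D: "xt t \<in> conf n" "scat_eqs n G s (xt t)" "\<forall>i\<in>W. yv (xt t) i = yv x i + (if i \<in> K then t else 0)"
    if t: "t \<in> T" for t
    using deform[OF x(1) s(1) x(2) cl, of t] t unfolding T_def xt_def by auto
  have inj: "inj_on (\<lambda>t. mob_class n (xt t)) T"
  proof (rule inj_onI)
    fix t t' assume tt: "t \<in> T" "t' \<in> T" "mob_class n (xt t) = mob_class n (xt t')"
    have "xt t' \<in> mob_class n (xt t')" using D(1)[OF tt(2)] mob_refl by (simp add: mob_class_def)
    then have "xt t' \<in> mob_class n (xt t)" using tt(3) by simp
    then have "mob_equiv n (xt t) (xt t')" by (simp add: mob_class_def)
    then have "cross_ratio a w c v (xt t') = cross_ratio a w c v (xt t)"
      by (rule mob_cr[OF _ D(1)[OF tt(1)]]) (use a(1) w c(1) v_lt ac in \<open>auto simp: W_iff\<close>)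
    then have eq: "(yv (xt t') c - yv (xt t') a) / (yv (xt t') c - yv (xt t') w) =
                   (yv (xt t) c - yv (xt t) a) / (yv (xt t) c - yv (xt t) w)"
      using cr_v[OF D(1)[OF tt(2)] a(1) w(1) c(1)] cr_v[OF D(1)[OF tt(1)] a(1) w(1) c(1)] w ac by simp
    have nz1: "yv (xt t) c - yv (xt t) w \<noteq> 0" "yv (xt t') c - yv (xt t') w \<noteq> 0"
      using yv_inj[OF D(1)[OF tt(1)] c(1) w(1)] yv_inj[OF D(1)[OF tt(2)] c(1) w(1)] w by auto
    have Yc: "yv (xt t) c = yv x c" "yv (xt t') c = yv x c" using D(3)[OF tt(1)] D(3)[OF tt(2)] c by auto
    have Ya: "yv (xt t) c - yv (xt t) a = (yv x c - yv x a) - t" "yv (xt t') c - yv (xt t') a = (yv x c - yv x a) - t'"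
      using D(3)[OF tt(1)] D(3)[OF tt(2)] a Yc by (simp_all add: algebra_simps)
    show "t = t'"
    proof (cases "w \<in> K")
      case True
      have ne: "yv x c - yv x a \<noteq> yv x c - yv x w" using yv_inj[OF x(1) a(1) w(1)] w by auto
      have Yw: "yv (xt t) c - yv (xt t) w = (yv x c - yv x w) - t" "yv (xt t') c - yv (xt t') w = (yv x c - yv x w) - t'"
        using D(3)[OF tt(1)] D(3)[OF tt(2)] w True Yc by (simp_all add: algebra_simps)
      show ?thesis
        using t_aux1[OF ne, of t' t] eq nz1 unfolding Ya Yw by simp
    next
      case False
      have ne: "yv x c - yv x w \<noteq> 0" using yv_inj[OF x(1) c(1) w(1)] w by auto
      have Yw: "yv (xt t) c - yv (xt t) w = yv x c - yv x w" "yv (xt t') c - yv (xt t') w = yv x c - yv x w"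
        using D(3)[OF tt(1)] D(3)[OF tt(2)] w False Yc by simp_all
      show ?thesis
        using t_aux2[OF ne, of "yv x c - yv x a" t' t] eq unfolding Ya Yw by simp
    qed
  qed
  have "(\<lambda>t. mob_class n (xt t)) ` T \<subseteq> mob_class n ` scat_fiber n G s"
  proof
    fix C assume "C \<in> (\<lambda>t. mob_class n (xt t)) ` T"
    then obtain t where t: "t \<in> T" "C = mob_class n (xt t)" by blast
    have "xt t \<in> scat_fiber n G s" using D(1,2)[OF t(1)] by (simp add: scat_fiber_def)
    then show "C \<in> mob_class n ` scat_fiber n G s" using t(2) by blast
  qed
  then have "finite ((\<lambda>t. mob_class n (xt t)) ` T)" using fib(2) finite_subset by blast
  then have "finite T" using finite_imageD[OF _ inj] by blast
  then show False using infT by blast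
qed

end

theorem mainTheorem14:
  fixes n :: nat and G :: "(nat \<times> nat) set"
  assumes "n \<ge> 4"
    and "simple_graph n G"
    and "copious n G"
    and "\<exists>v. universal_vertex n G v"
  shows "top_copious n G"
proof -
  obtain v where v: "universal_vertex n G v" using assms(4) by blast
  interpret UV n G v using assms(1,2) v by unfold_locales
  have cn: "conn" by (rule copious_conn[OF assms(3)])
  obtain e where e: "e \<in> Gp" using conn_f0[OF cn] by blast
  show ?thesis
    unfolding top_copious_def
  proof (intro allI impI)
    fix r u assume b: "is_lattice_basis n G r u"
    interpret UVC n G v r u "fst e" "snd e"
      using assms(1,2) v b e cn by unfold_locales auto
    show "embedding_M0n n r (Phi G r u)" by (rule embedding)
  qed
qed


end
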